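(* For any rooted tree-structure $\varphi$, the $R$-linear map $\rho:\mathcal{T}(\varphi)\to\mathcal{T}(\varphi)\otimes\mathcal{T}(\varphi)$ defined on generators by $$\rho(T,s)=\sum_{e\in\operatorname{edg}(T)}(T^1_e,s|_{T^1_e})\otimes(T^2_e,s|_{T^2_e})$$ is a pre-Lie comultiplication.
   Context: $R$ is a commutative ring with unit. A pre-Lie comultiplication on an $R$-module $A$ is an $R$-linear $\rho:A\to A\otimes A$ with $(\mathrm{id}-P^{1,2})\big((\rho\otimes\mathrm{id})\rho-(\mathrm{id}\otimes\rho)\rho\big)=0$, where $P^{1,2}(x\otimes y\otimes z)=y\otimes x\otimes z$. Trees are finite; a rooted tree has a distinguished vertex, the root. A subtree $T'$ of a rooted tree $T$ (a tree formed by some vertices and edges of $T$) is rooted at the unique vertex $v$ of $T'$ such that every path from the root of $T$ to a point of $T'$ passes through $v$. An embedding of rooted trees $j:T'\to T$ is a homeomorphism of $T'$ onto a subtree of $T$ respecting vertices, edges and roots. $RTrees$ is the category of rooted trees and embeddings. A rooted tree-structure is a contravariant functor $\varphi$ from $RTrees$ to sets. A rooted $\varphi$-tree is a pair $(T,s)$ with $s\in\varphi(T)$; $(T,s)$ and $(\tilde T,\tilde s)$ are homeomorphic if there is a homeomorphism $j:T\to\tilde T$ with $\varphi(j)(\tilde s)=s$. For a subtree $T'\subset T$, $s|_{T'}=\varphi(\iota)(s)$ with $\iota$ the inclusion. $\mathcal{T}(\varphi)$ is the free $R$-module on homeomorphism classes of rooted $\varphi$-trees. For an edge $e$ of $T$,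 removing the interior of $e$ leaves two subtrees $T^1_e,T^2_e$, with $T^2_e$ containing the root of $T$ (rooted there) and $T^1_e$ rooted at its vertex adjacent to $e$; $\operatorname{edg}(T)$ is the edge set. *)

theory Defs
  imports Main "HOL-Library.Function_Algebras"
begin

text \<open>Vertices are taken in nat; every finite tree is isomorphic to one
of these, so the category of such trees is equivalent to RTrees.\<close>

type_synonym rtree = "nat set \<times> nat set set \<times> nat"

definition verts :: "rtree \<Rightarrow> nat set" where "verts T = fst T"
definition edges :: "rtree \<Rightarrow> nat set set" where "edges T = fst (snd T)"
definition root :: "rtree \<Rightarrow> nat" where "root T = snd (snd T)"

definition adj :: "nat set set \<Rightarrow> (nat \<times> nat) set" where
  "adj E = {(u, v). {u, v} \<in> E}"

definition is_path :: "nat set set \<Rightarrow> nat list \<Rightarrow> bool" where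
  "is_path E xs \<longleftrightarrow> xs \<noteq> [] \<and> distinct xs \<and>
     (\<forall>i. Suc i < length xs \<longrightarrow> {xs ! i, xs ! Suc i} \<in> E)"

definition has_cycle :: "nat set set \<Rightarrow> bool" where
  "has_cycle E \<longleftrightarrow> (\<exists>xs. length xs \<ge> 3 \<and> is_path E xs \<and> {last xs, hd xs} \<in> E)"

definition is_tree :: "nat set \<Rightarrow> nat set set \<Rightarrow> bool" where
  "is_tree V E \<longleftrightarrow> finite V \<and> V \<noteq> {} \<and>
     (\<forall>e\<in>E. \<exists>u v. e = {u, v} \<and> u \<noteq> v \<and> u \<in> V \<and> v \<in> V) \<and>
     (\<forall>u\<in>V. \<forall>v\<in>V. (u, v) \<in> (adj E)\<^sup>*) \<and>
     \<not> has_cycle E"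

definition is_rtree :: "rtree \<Rightarrow> bool" where
  "is_rtree T \<longleftrightarrow> is_tree (verts T) (edges T) \<and> root T \<in> verts T"

definition subroot :: "rtree \<Rightarrow> nat set \<Rightarrow> nat" where
  "subroot T V' = (THE v. v \<in> V' \<and> (\<forall>w\<in>V'. \<forall>xs. is_path (edges T) xs \<and> hd xs = root T
        \<and> last xs = w \<longrightarrow> v \<in> set xs))"

definition img_edges :: "(nat \<Rightarrow> nat) \<Rightarrow> nat set set \<Rightarrow> nat set set" where
  "img_edges f E = (\<lambda>e. f ` e) ` E"

definition embedding :: "rtree \<Rightarrow> rtree \<Rightarrow> (nat \<Rightarrow> nat) \<Rightarrow> bool" where
  "embedding T' T f \<longleftrightarrow> is_rtree T' \<and> is_rtree T \<and> inj_on f (verts T') \<and>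
     f ` verts T' \<subseteq> verts T \<and> img_edges f (edges T') \<subseteq> edges T \<and>
     f (root T') = subroot T (f ` verts T')"

definition rhomeo :: "rtree \<Rightarrow> rtree \<Rightarrow> (nat \<Rightarrow> nat) \<Rightarrow> bool" where
  "rhomeo T T2 f \<longleftrightarrow> is_rtree T \<and> is_rtree T2 \<and> bij_betw f (verts T) (verts T2) \<and>
     img_edges f (edges T) = edges T2 \<and> f (root T) = root T2"

text \<open>A contravariant functor from RTrees to sets: object part phi, morphism part
phimap T' T f (for an embedding f : T' \<rightarrow> T) mapping phi T to phi T'.
Morphisms are determined by their vertex maps.\<close>
definition rtree_structure ::
  "(rtree \<Rightarrow> 'a set) \<Rightarrow> (rtree \<Rightarrow> rtree \<Rightarrow> (nat \<Rightarrow> nat) \<Rightarrow> 'a \<Rightarrow> 'a) \<Rightarrow> bool" where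
  "rtree_structure phi phimap \<longleftrightarrow>
     (\<forall>T' T f s. embedding T' T f \<and> s \<in> phi T \<longrightarrow> phimap T' T f s \<in> phi T') \<and>
     (\<forall>T' T f g s. embedding T' T f \<and> (\<forall>v\<in>verts T'. f v = g v) \<and> s \<in> phi T
        \<longrightarrow> phimap T' T f s = phimap T' T g s) \<and>
     (\<forall>T s. is_rtree T \<and> s \<in> phi T \<longrightarrow> phimap T T id s = s) \<and>
     (\<forall>T1 T2 T3 f g s. embedding T1 T2 f \<and> embedding T2 T3 g \<and> s \<in> phi T3 \<longrightarrow>
        phimap T1 T3 (g \<circ> f) s = phimap T1 T2 f (phimap T2 T3 g s))"

definition restr :: "(rtree \<Rightarrow> rtree \<Rightarrow> (nat \<Rightarrow> nat) \<Rightarrow> 'a \<Rightarrow> 'a) \<Rightarrow> rtree \<Rightarrow> rtree \<Rightarrow> 'a \<Rightarrow> 'a" where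
  "restr phimap T T' s = phimap T' T id s"

definition rclass :: "(rtree \<Rightarrow> 'a set) \<Rightarrow> (rtree \<Rightarrow> rtree \<Rightarrow> (nat \<Rightarrow> nat) \<Rightarrow> 'a \<Rightarrow> 'a)
    \<Rightarrow> rtree \<Rightarrow> 'a \<Rightarrow> (rtree \<times> 'a) set" where
  "rclass phi phimap T s = {(T2, s2). s2 \<in> phi T2 \<and> (\<exists>j. rhomeo T T2 j \<and> phimap T T2 j s2 = s)}"

definition rclasses :: "(rtree \<Rightarrow> 'a set) \<Rightarrow> (rtree \<Rightarrow> rtree \<Rightarrow> (nat \<Rightarrow> nat) \<Rightarrow> 'a \<Rightarrow> 'a)
    \<Rightarrow> (rtree \<times> 'a) set set" where
  "rclasses phi phimap = {rclass phi phimap T s | T s. is_rtree T \<and> s \<in> phi T}"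

text \<open>T^2_e: the component of T minus the interior of e containing the root (rooted
there); T^1_e: the other component, rooted at its endpoint of e.\<close>
definition cut_verts2 :: "rtree \<Rightarrow> nat set \<Rightarrow> nat set" where
  "cut_verts2 T e = {w \<in> verts T. (root T, w) \<in> (adj (edges T - {e}))\<^sup>*}"

definition cut_verts1 :: "rtree \<Rightarrow> nat set \<Rightarrow> nat set" where
  "cut_verts1 T e = verts T - cut_verts2 T e"

definition cut_tree2 :: "rtree \<Rightarrow> nat set \<Rightarrow> rtree" where
  "cut_tree2 T e = (cut_verts2 T e, {e' \<in> edges T - {e}. e' \<subseteq> cut_verts2 T e}, root T)"

definition cut_tree1 :: "rtree \<Rightarrow> nat set \<Rightarrow> rtree" where
  "cut_tree1 T e = (cut_verts1 T e, {e' \<in> edges T - {e}. e' \<subseteq> cut_verts1 T e},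
                    THE v. v \<in> e \<and> v \<in> cut_verts1 T e)"

text \<open>The free R-module on a basis B is modelled as the finitely supported functions
B \<Rightarrow> R; the tensor product of free modules on B and C is identified with the free
module on B \<times> C (basis element (b, c) = b \<otimes> c).\<close>

definition free_mod :: "'b set \<Rightarrow> ('b \<Rightarrow> 'r::zero) set" where
  "free_mod B = {x. finite {b. x b \<noteq> 0} \<and> {b. x b \<noteq> 0} \<subseteq> B}"

definition delta :: "'b \<Rightarrow> 'b \<Rightarrow> 'r::{zero,one}" where
  "delta b = (\<lambda>b'. if b' = b then 1 else 0)"

definition lin :: "('b \<Rightarrow> 'c \<Rightarrow> 'r::comm_ring_1) \<Rightarrow> ('b \<Rightarrow> 'r) \<Rightarrow> 'c \<Rightarrow> 'r" where
  "lin f x = (\<lambda>c. \<Sum>b\<in>{b. x b \<noteq> 0}. x b * f b c)"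

definition tens_left :: "(('b \<Rightarrow> 'r) \<Rightarrow> ('b \<times> 'b \<Rightarrow> 'r)) \<Rightarrow> ('b \<times> 'b \<Rightarrow> 'r::comm_ring_1)
    \<Rightarrow> ('b \<times> 'b \<times> 'b \<Rightarrow> 'r)" where
  "tens_left rho = lin (\<lambda>(c, d). lin (\<lambda>(c1, c2). delta (c1, c2, d)) (rho (delta c)))"

definition tens_right :: "(('b \<Rightarrow> 'r) \<Rightarrow> ('b \<times> 'b \<Rightarrow> 'r)) \<Rightarrow> ('b \<times> 'b \<Rightarrow> 'r::comm_ring_1)
    \<Rightarrow> ('b \<times> 'b \<times> 'b \<Rightarrow> 'r)" where
  "tens_right rho = lin (\<lambda>(c, d). lin (\<lambda>(d1, d2). delta (c, d1, d2)) (rho (delta d)))"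

definition P12 :: "('b \<times> 'b \<times> 'b \<Rightarrow> 'r::comm_ring_1) \<Rightarrow> ('b \<times> 'b \<times> 'b \<Rightarrow> 'r)" where
  "P12 = lin (\<lambda>(a, b, c). delta (b, a, c))"

definition pre_lie_comult :: "'b set \<Rightarrow> (('b \<Rightarrow> 'r) \<Rightarrow> ('b \<times> 'b \<Rightarrow> 'r::comm_ring_1)) \<Rightarrow> bool" where
  "pre_lie_comult B rho \<longleftrightarrow>
     (\<forall>x\<in>free_mod B. \<forall>y\<in>free_mod B. \<forall>a b. rho (\<lambda>i. a * x i + b * y i) = (\<lambda>p. a * rho x p + b * rho y p)) \<and>
     (\<forall>x\<in>free_mod B. rho x \<in> free_mod (B \<times> B)) \<and>
     (\<forall>x\<in>free_mod B. let z = tens_left rho (rho x) - tens_right rho (rho x) in z - P12 z = 0)"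

definition rho_gen :: "(rtree \<Rightarrow> 'a set) \<Rightarrow> (rtree \<Rightarrow> rtree \<Rightarrow> (nat \<Rightarrow> nat) \<Rightarrow> 'a \<Rightarrow> 'a)
    \<Rightarrow> rtree \<Rightarrow> 'a \<Rightarrow> ((rtree \<times> 'a) set \<times> (rtree \<times> 'a) set \<Rightarrow> 'r::comm_ring_1)" where
  "rho_gen phi phimap T s =
     (\<Sum>e\<in>edges T. delta (rclass phi phimap (cut_tree1 T e) (restr phimap T (cut_tree1 T e) s),
                          rclass phi phimap (cut_tree2 T e) (restr phimap T (cut_tree2 T e) s)))"

text \<open>Linear extension, using an (arbitrary) representative of each class.\<close>
definition rho_tree :: "(rtree \<Rightarrow> 'a set) \<Rightarrow> (rtree \<Rightarrow> rtree \<Rightarrow> (nat \<Rightarrow> nat) \<Rightarrow> 'a \<Rightarrow> 'a)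
    \<Rightarrow> ((rtree \<times> 'a) set \<Rightarrow> 'r) \<Rightarrow> ((rtree \<times> 'a) set \<times> (rtree \<times> 'a) set \<Rightarrow> 'r::comm_ring_1)" where
  "rho_tree phi phimap = lin (\<lambda>C. case (SOME p. p \<in> C) of (T, s) \<Rightarrow> rho_gen phi phimap T s)"

end

theory Submission
  imports Defs
begin


lemma adj_sym: "(u, v) \<in> adj F \<longleftrightarrow> (v, u) \<in> adj F"
  by (auto simp: adj_def insert_commute)

lemma adj_conv: "(adj F)\<inverse> = adj F"
  using adj_sym by auto

lemma rt_sym: "(u, v) \<in> (adj F)\<^sup>* \<Longrightarrow> (v, u) \<in> (adj F)\<^sup>*"
  by (metis adj_conv rtrancl_converseI)

lemma adj_mono: "F \<subseteq> G \<Longrightarrow> adj F \<subseteq> adj G"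
  by (auto simp: adj_def)

lemma rt_mono: "F \<subseteq> G \<Longrightarrow> (u, v) \<in> (adj F)\<^sup>* \<Longrightarrow> (u, v) \<in> (adj G)\<^sup>*"
  using rtrancl_mono[OF adj_mono] by blast

lemma adjI: "{u, v} \<in> F \<Longrightarrow> (u, v) \<in> adj F"
  by (simp add: adj_def)

lemma adjD: "(u, v) \<in> adj F \<Longrightarrow> {u, v} \<in> F"
  by (simp add: adj_def)

lemma is_path_mono: "F \<subseteq> G \<Longrightarrow> is_path F xs \<Longrightarrow> is_path G xs"
  by (auto simp: is_path_def)

lemma has_cycle_mono: "F \<subseteq> G \<Longrightarrow> has_cycle F \<Longrightarrow> has_cycle G"
  unfolding has_cycle_def using is_path_mono by blast

lemma is_path_single: "is_path F [x]"
  by (simp add: is_path_def)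

lemma is_path_ConsD: "is_path F (x # y # ys) \<Longrightarrow> {x, y} \<in> F \<and> is_path F (y # ys)"
proof -
  assume a: "is_path F (x # y # ys)"
  then have "{(x # y # ys) ! 0, (x # y # ys) ! Suc 0} \<in> F" unfolding is_path_def by fastforce
  moreover have "is_path F (y # ys)"
  proof -
    have h: "\<forall>i. Suc i < length (x # y # ys) \<longrightarrow> {(x # y # ys) ! i, (x # y # ys) ! Suc i} \<in> F"
      using a unfolding is_path_def by blast
    have "\<forall>i. Suc i < length (y # ys) \<longrightarrow> {(y # ys) ! i, (y # ys) ! Suc i} \<in> F"
    proof (intro allI impI)
      fix i assume "Suc i < length (y # ys)"
      then show "{(y # ys) ! i, (y # ys) ! Suc i} \<in> F" using h[rule_format, of "Suc i"] by simp
    qed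
    then show ?thesis using a unfolding is_path_def by simp
  qed
  ultimately show ?thesis by simp
qed

lemma walk_path:
  assumes "(u, v) \<in> (adj F)\<^sup>*"
  shows "\<exists>xs. is_path F xs \<and> hd xs = u \<and> last xs = v \<and> (\<forall>z\<in>set xs. (u, z) \<in> (adj F)\<^sup>*)"
  using assms
proof (induction rule: rtrancl_induct)
  case base
  have "is_path F [u] \<and> hd [u] = u \<and> last [u] = u \<and> (\<forall>z\<in>set [u]. (u, z) \<in> (adj F)\<^sup>*)"
    by (auto simp: is_path_def)
  then show ?case by blast
next
  case (step y z)
  then obtain xs where xs: "is_path F xs" "hd xs = u" "last xs = y"
    "\<forall>z\<in>set xs. (u, z) \<in> (adj F)\<^sup>*" by blast
  have ne: "xs \<noteq> []" using xs(1) by (simp add: is_path_def)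
  show ?case
  proof (cases "z \<in> set xs")
    case True
    then obtain i where i: "i < length xs" "xs ! i = z" by (metis in_set_conv_nth)
    let ?ys = "take (Suc i) xs"
    have "is_path F ?ys" using xs(1) i unfolding is_path_def
      by (auto simp: distinct_take)
    moreover have "hd ?ys = u" using xs(2) ne by simp
    moreover have "last ?ys = z" using i by (simp add: take_Suc_conv_app_nth)
    moreover have "\<forall>w\<in>set ?ys. (u, w) \<in> (adj F)\<^sup>*" using xs(4) by (meson in_set_takeD)
    ultimately show ?thesis by blast
  next
    case False
    let ?ys = "xs @ [z]"
    have "is_path F ?ys" unfolding is_path_def
    proof (intro conjI allI impI)
      show "distinct ?ys" using False xs(1) by (simp add: is_path_def)
      fix i assume i: "Suc i < length ?ys"
      show "{?ys ! i, ?ys ! Suc i} \<in> F"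
      proof (cases "Suc i < length xs")
        case True
        then show ?thesis using xs(1) by (simp add: is_path_def nth_append)
      next
        case False
        then have "i = length xs - 1" using i by simp
        then have "?ys ! i = y" "?ys ! Suc i = z" using xs(3) ne
          by (auto simp: nth_append last_conv_nth)
        then show ?thesis using step(2) by (simp add: adj_def)
      qed
    qed simp
    moreover have "hd ?ys = u" using xs(2) ne by simp
    moreover have "last ?ys = z" by simp
    moreover have "\<forall>w\<in>set ?ys. (u, w) \<in> (adj F)\<^sup>*" using xs(4) step by auto
    ultimately show ?thesis by blast
  qed
qed

section \<open>Rooted trees\<close>

lemma rtreeD:
  assumes "is_rtree T"
  shows "finite (verts T)" "root T \<in> verts T"
    "\<And>g. g \<in> edges T \<Longrightarrow> \<exists>u v. g = {u, v} \<and> u \<noteq> v \<and> u \<in> verts T \<and> v \<in> verts T"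
    "\<And>u v. u \<in> verts T \<Longrightarrow> v \<in> verts T \<Longrightarrow> (u, v) \<in> (adj (edges T))\<^sup>*"
    "\<not> has_cycle (edges T)"
  using assms by (auto simp: is_rtree_def is_tree_def)

lemma edge_sub: "is_rtree T \<Longrightarrow> g \<in> edges T \<Longrightarrow> g \<subseteq> verts T"
  using rtreeD(3) by blast

lemma finite_edges: "is_rtree T \<Longrightarrow> finite (edges T)"
proof -
  assume a: "is_rtree T"
  have "edges T \<subseteq> Pow (verts T)" using edge_sub[OF a] by blast
  then show ?thesis using rtreeD(1)[OF a] finite_subset by blast
qed

lemma adj_verts: "is_rtree T \<Longrightarrow> F \<subseteq> edges T \<Longrightarrow> (x, y) \<in> adj F \<Longrightarrow> x \<in> verts T \<and> y \<in> verts T"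
  using edge_sub adjD by blast

lemma rt_verts:
  assumes "is_rtree T" "F \<subseteq> edges T" "(x, y) \<in> (adj F)\<^sup>*" "x \<in> verts T"
  shows "y \<in> verts T"
  using assms(3,4)
  by (induction rule: rtrancl_induct) (use assms(1,2) adj_verts in blast)+

lemma subroot_eq:
  assumes "is_rtree T" "root T \<in> V'"
  shows "subroot T V' = root T"
  unfolding subroot_def
proof (rule the_equality)
  show "root T \<in> V' \<and> (\<forall>w\<in>V'. \<forall>xs. is_path (edges T) xs \<and> hd xs = root T \<and> last xs = w \<longrightarrow> root T \<in> set xs)"
    using assms by (auto simp: is_path_def) (metis hd_in_set)
next
  fix v assume "v \<in> V' \<and> (\<forall>w\<in>V'. \<forall>xs. is_path (edges T) xs \<and> hd xs = root T \<and> last xs = w \<longrightarrow> v \<in> set xs)"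
  then have "v \<in> set [root T]" using assms(2) is_path_single by fastforce
  then show "v = root T" by simp
qed


locale cut =
  fixes T :: rtree and e :: "nat set"
  assumes rt: "is_rtree T" and eE: "e \<in> edges T"
begin

abbreviation "V \<equiv> verts T"
abbreviation "E \<equiv> edges T"
abbreviation "r \<equiv> root T"
abbreviation "V2 \<equiv> cut_verts2 T e"
abbreviation "V1 \<equiv> cut_verts1 T e"
abbreviation "lo \<equiv> root (cut_tree1 T e)"

lemma V2_sub: "V2 \<subseteq> V" by (auto simp: cut_verts2_def)
lemma r_V2: "r \<in> V2" using rtreeD(2)[OF rt] by (auto simp: cut_verts2_def)
lemma V1_eq: "V1 = V - V2" by (simp add: cut_verts1_def)
lemma V2_iff: "x \<in> V2 \<longleftrightarrow> x \<in> V \<and> (r, x) \<in> (adj (E - {e}))\<^sup>*" by (simp add: cut_verts2_def)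

lemma closure:
  assumes "{x, y} \<in> E" "{x, y} \<noteq> e" "y \<in> V2"
  shows "x \<in> V2"
proof -
  have "x \<in> V" using edge_sub[OF rt assms(1)] by auto
  moreover have "(y, x) \<in> adj (E - {e})" using assms by (simp add: adj_def insert_commute)
  ultimately show ?thesis using assms(3) V2_iff by (meson rtrancl_into_rtrancl)
qed

lemma ex_ab: "\<exists>a b. e = {a, b} \<and> a \<noteq> b \<and> a \<in> V2 \<and> b \<in> V1"
proof -
  obtain u v where uv: "e = {u, v}" "u \<noteq> v" "u \<in> V" "v \<in> V" using rtreeD(3)[OF rt eE] by blast
  have one: "u \<in> V2 \<or> v \<in> V2"
  proof (rule ccontr)
    assume n: "\<not> (u \<in> V2 \<or> v \<in> V2)"
    have "(r, u) \<in> (adj E)\<^sup>*" using rtreeD(2,4)[OF rt] uv by blast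
    then have "u \<in> V2"
    proof (induction rule: rtrancl_induct)
      case base then show ?case using r_V2 .
    next
      case (step y z)
      then have yz: "{z, y} \<in> E" by (simp add: adj_def insert_commute)
      have "{z, y} \<noteq> e" using n step.IH uv(1) by auto
      then show ?case using closure yz step.IH by blast
    qed
    then show False using n by blast
  qed
  have two: "\<not> (u \<in> V2 \<and> v \<in> V2)"
  proof
    assume b: "u \<in> V2 \<and> v \<in> V2"
    have "(u, r) \<in> (adj (E - {e}))\<^sup>*" using b V2_iff rt_sym by blast
    moreover have "(r, v) \<in> (adj (E - {e}))\<^sup>*" using b V2_iff by blast
    ultimately have "(u, v) \<in> (adj (E - {e}))\<^sup>*" by simp
    then obtain xs where xs: "is_path (E - {e}) xs" "hd xs = u" "last xs = v"
      using walk_path by blast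
    have ne: "xs \<noteq> []" using xs(1) by (simp add: is_path_def)
    have l3: "length xs \<ge> 3"
    proof (rule ccontr)
      assume "\<not> length xs \<ge> 3"
      moreover have "length xs > 0" using ne by simp
      ultimately have "length xs = 1 \<or> length xs = 2" by linarith
      then show False
      proof
        assume "length xs = 1" then obtain x where "xs = [x]" by (auto simp: length_Suc_conv)
        then show False using xs uv by simp
      next
        assume "length xs = 2" then obtain x y where xy: "xs = [x, y]"
          by (auto simp: length_Suc_conv numeral_2_eq_2)
        then have "{x, y} \<in> E - {e}" using xs(1) is_path_ConsD by blast
        moreover have "{x, y} = e" using xy xs uv by simp
        ultimately show False by blast
      qed
    qed
    have "is_path E xs" using is_path_mono[OF _ xs(1)] by blast
    moreover have "{last xs, hd xs} \<in> E" using xs uv eE by (simp add: insert_commute)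
    ultimately have "has_cycle E" using l3 unfolding has_cycle_def by blast
    then show False using rtreeD(5)[OF rt] by blast
  qed
  show ?thesis
  proof (cases "u \<in> V2")
    case True
    then have "v \<notin> V2" using two by blast
    then have "v \<in> V1" using uv(4) by (simp add: V1_eq)
    then have "e = {u, v} \<and> u \<noteq> v \<and> u \<in> V2 \<and> v \<in> V1" using True uv(1,2) by simp
    then show ?thesis by (intro exI)
  next
    case False
    then have "v \<in> V2" "u \<in> V1" using one uv(3) by (auto simp: V1_eq)
    moreover have "e = {v, u}" using uv by (simp add: insert_commute)
    ultimately have "e = {v, u} \<and> v \<noteq> u \<and> v \<in> V2 \<and> u \<in> V1" using uv(2) by simp
    then show ?thesis by (intro exI)
  qed
qed

lemma lo_eq: "b \<in> e \<Longrightarrow> b \<in> V1 \<Longrightarrow> lo = b"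
proof -
  assume b: "b \<in> e" "b \<in> V1"
  obtain a b' where ab: "e = {a, b'}" "a \<noteq> b'" "a \<in> V2" "b' \<in> V1" using ex_ab by blast
  have u: "v = b'" if "v \<in> e \<and> v \<in> V1" for v
  proof -
    have "v \<notin> V2" using that by (simp add: V1_eq)
    then have "v \<noteq> a" using ab(3) by blast
    then show ?thesis using that ab(1) by simp
  qed
  have b'e: "b' \<in> e" using ab(1) by simp
  have "lo = (THE v. v \<in> e \<and> v \<in> V1)" by (simp add: cut_tree1_def root_def)
  also have "\<dots> = b'"
  proof (rule the_equality)
    show "b' \<in> e \<and> b' \<in> V1" using ab(4) b'e by blast
  next
    fix v assume "v \<in> e \<and> v \<in> V1" then show "v = b'" by (rule u)
  qed
  also have "b' = b" using u[of b] b by blast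
  finally show ?thesis .
qed

lemma ends: "\<exists>a. {a, lo} = e \<and> a \<noteq> lo \<and> a \<in> V2 \<and> lo \<in> V1"
proof -
  obtain a b where ab: "e = {a, b}" "a \<noteq> b" "a \<in> V2" "b \<in> V1" using ex_ab by blast
  have "b \<in> e" using ab(1) by simp
  then have "lo = b" by (rule lo_eq[OF _ ab(4)])
  then have "{a, lo} = e" "a \<noteq> lo" "a \<in> V2" "lo \<in> V1" using ab by simp_all
  then show ?thesis by blast
qed

lemma lo_V1: "lo \<in> V1" using ends by (elim exE conjE)
lemma lo_e: "lo \<in> e" using ends by (elim exE conjE) blast
lemma lo_notV2: "lo \<notin> V2" using lo_V1 by (simp add: V1_eq)

lemma closure1:
  assumes "{x, y} \<in> E" "{x, y} \<noteq> e" "y \<in> V1"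
  shows "x \<in> V1"
proof (rule ccontr)
  assume "x \<notin> V1"
  moreover have "x \<in> V" using edge_sub[OF rt assms(1)] by blast
  ultimately have "x \<in> V2" by (simp add: V1_eq)
  moreover have "{y, x} \<in> E" "{y, x} \<noteq> e" using assms by (simp_all add: insert_commute)
  ultimately have "y \<in> V2" using closure by blast
  then show False using assms(3) by (simp add: V1_eq)
qed

lemma V1_iff: "x \<in> V1 \<longleftrightarrow> x \<in> V \<and> x \<notin> V2" by (simp add: V1_eq)

lemma crossing:
  assumes "F \<subseteq> E" "(x, y) \<in> (adj F)\<^sup>*" "y \<in> V2" "x \<in> V1"
  shows "(lo, x) \<in> (adj {g \<in> F - {e}. g \<subseteq> V1})\<^sup>*"
  using assms(2,3,4)
proof (induction rule: converse_rtrancl_induct)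
  case base then show ?case by (simp add: V1_iff)
next
  case (step x x')
  obtain a where a: "{a, lo} = e" "a \<noteq> lo" "a \<in> V2" "lo \<in> V1" using ends by blast
  have xx: "{x, x'} \<in> F" using step(1) by (simp add: adj_def)
  then have xxE: "{x, x'} \<in> E" using assms(1) by blast
  have x'V: "x' \<in> V" using edge_sub[OF rt xxE] by auto
  show ?case
  proof (cases "x' \<in> V1")
    case True
    have "a \<notin> V1" using a(3) by (simp add: V1_iff)
    then have "a \<notin> {x, x'}" using True step(5) by blast
    then have ne: "{x, x'} \<noteq> e" using a(1) by blast
    have "{x', x} = {x, x'}" by (rule insert_commute)
    then have "{x', x} \<in> {g \<in> F - {e}. g \<subseteq> V1}" using xx ne True step(5) by simp
    then have "(x', x) \<in> adj {g \<in> F - {e}. g \<subseteq> V1}" by (rule adjI)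
    then show ?thesis using step.IH[OF step(4) True] by (meson rtrancl_into_rtrancl)
  next
    case False
    then have "x' \<in> V2" using x'V by (simp add: V1_iff)
    moreover have "x \<notin> V2" using step(5) by (simp add: V1_iff)
    ultimately have "{x, x'} = e" using closure[OF xxE] by blast
    then have "x \<in> e" by blast
    then show ?thesis using lo_eq step(5) by simp
  qed
qed

lemma V2_conn:
  assumes "w \<in> V2"
  shows "(r, w) \<in> (adj {g \<in> E - {e}. g \<subseteq> V2})\<^sup>*"
proof -
  have "(r, w) \<in> (adj (E - {e}))\<^sup>*" using assms V2_iff by blast
  then show ?thesis
  proof (induction rule: rtrancl_induct)
    case base then show ?case by simp
  next
    case (step y z)
    have yz: "{y, z} \<in> E - {e}" using step(2) by (simp add: adj_def)
    have "y \<in> V" using rt_verts[OF rt _ step(1) rtreeD(2)[OF rt]] by blast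
    then have yV2: "y \<in> V2" using step(1) V2_iff by blast
    have zy: "{z, y} \<in> E" "{z, y} \<noteq> e" using yz by (simp_all add: insert_commute)
    have "z \<in> V2" using closure[OF zy yV2] .
    then have "{y, z} \<in> {g \<in> E - {e}. g \<subseteq> V2}" using yz yV2 by blast
    then have "(y, z) \<in> adj {g \<in> E - {e}. g \<subseteq> V2}" by (rule adjI)
    then show ?case using step.IH by (meson rtrancl_into_rtrancl)
  qed
qed

lemma V1_conn:
  assumes "w \<in> V1"
  shows "(lo, w) \<in> (adj {g \<in> E - {e}. g \<subseteq> V1})\<^sup>*"
proof -
  have "w \<in> V" using assms by (simp add: V1_iff)
  then have "(w, r) \<in> (adj E)\<^sup>*" using rtreeD(2,4)[OF rt] by blast
  then show ?thesis using crossing[of E w r] r_V2 assms by blast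
qed

lemma edge_side: "g \<in> E \<Longrightarrow> g \<noteq> e \<Longrightarrow> g \<subseteq> V1 \<or> g \<subseteq> V2"
proof -
  assume g: "g \<in> E" "g \<noteq> e"
  obtain u v where uv: "g = {u, v}" "u \<in> V" "v \<in> V" using rtreeD(3)[OF rt g(1)] by blast
  show ?thesis
  proof (cases "v \<in> V2")
    case True then have "u \<in> V2" using closure g uv by blast
    then show ?thesis using True uv by blast
  next
    case False then have "v \<in> V1" using uv by (simp add: V1_iff)
    then have "u \<in> V1" using closure1 g uv by blast
    then show ?thesis using \<open>v \<in> V1\<close> uv by blast
  qed
qed

end


context cut begin

lemma verts_cut2[simp]: "verts (cut_tree2 T e) = V2" by (simp add: verts_def cut_tree2_def)
lemma edges_cut2[simp]: "edges (cut_tree2 T e) = {g \<in> E - {e}. g \<subseteq> V2}" by (simp add: edges_def cut_tree2_def)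
lemma root_cut2[simp]: "root (cut_tree2 T e) = r" by (simp add: root_def cut_tree2_def)
lemma verts_cut1[simp]: "verts (cut_tree1 T e) = V1" by (simp add: verts_def cut_tree1_def)
lemma edges_cut1[simp]: "edges (cut_tree1 T e) = {g \<in> E - {e}. g \<subseteq> V1}" by (simp add: edges_def cut_tree1_def)

lemma rtree2: "is_rtree (cut_tree2 T e)"
  unfolding is_rtree_def is_tree_def
proof (intro conjI ballI)
  show "finite (verts (cut_tree2 T e))" using rtreeD(1)[OF rt] V2_sub finite_subset by auto
  show "verts (cut_tree2 T e) \<noteq> {}" using r_V2 by auto
  show "root (cut_tree2 T e) \<in> verts (cut_tree2 T e)" using r_V2 by auto
  show "\<not> has_cycle (edges (cut_tree2 T e))" using has_cycle_mono[of "edges (cut_tree2 T e)" E] rtreeD(5)[OF rt] by auto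
  fix g assume "g \<in> edges (cut_tree2 T e)"
  then show "\<exists>u v. g = {u, v} \<and> u \<noteq> v \<and> u \<in> verts (cut_tree2 T e) \<and> v \<in> verts (cut_tree2 T e)"
    using rtreeD(3)[OF rt] by fastforce
next
  fix u v assume "u \<in> verts (cut_tree2 T e)" "v \<in> verts (cut_tree2 T e)"
  then show "(u, v) \<in> (adj (edges (cut_tree2 T e)))\<^sup>*"
    using V2_conn rt_sym by (simp) (meson rtrancl_trans)
qed

lemma rtree1: "is_rtree (cut_tree1 T e)"
  unfolding is_rtree_def is_tree_def
proof (intro conjI ballI)
  show "finite (verts (cut_tree1 T e))" using rtreeD(1)[OF rt] V1_eq by auto
  show "verts (cut_tree1 T e) \<noteq> {}" using lo_V1 by auto
  show "root (cut_tree1 T e) \<in> verts (cut_tree1 T e)" using lo_V1 by auto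
  show "\<not> has_cycle (edges (cut_tree1 T e))" using has_cycle_mono[of "edges (cut_tree1 T e)" E] rtreeD(5)[OF rt] by auto
  fix g assume "g \<in> edges (cut_tree1 T e)"
  then show "\<exists>u v. g = {u, v} \<and> u \<noteq> v \<and> u \<in> verts (cut_tree1 T e) \<and> v \<in> verts (cut_tree1 T e)"
    using rtreeD(3)[OF rt] by fastforce
next
  fix u v assume "u \<in> verts (cut_tree1 T e)" "v \<in> verts (cut_tree1 T e)"
  then show "(u, v) \<in> (adj (edges (cut_tree1 T e)))\<^sup>*"
    using V1_conn rt_sym by (simp) (meson rtrancl_trans)
qed

lemma path_cross:
  "is_path E xs \<Longrightarrow> hd xs \<in> V2 \<Longrightarrow> last xs \<in> V1 \<Longrightarrow> lo \<in> set xs"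
proof (induction xs)
  case Nil then show ?case by (simp add: is_path_def)
next
  case (Cons x ys)
  show ?case
  proof (cases ys)
    case Nil then show ?thesis using Cons V1_eq by auto
  next
    case (Cons y zs)
    have p: "{x, y} \<in> E" "is_path E ys" using is_path_ConsD Cons \<open>is_path E (x # ys)\<close> by auto
    show ?thesis
    proof (cases "y \<in> V2")
      case True
      then have "lo \<in> set ys" using Cons.IH p(2) Cons.prems \<open>ys = y # zs\<close> by auto
      then show ?thesis by simp
    next
      case False
      have "y \<in> V" using edge_sub[OF rt p(1)] by auto
      then have yV1: "y \<in> V1" using False V1_eq by auto
      have xV2: "x \<in> V2" using Cons.prems by simp
      have "{y, x} = e" using closure[of y x] p(1) xV2 False by (auto simp: insert_commute)
      then have "y \<in> e" by blast
      then have "y = lo" using lo_eq yV1 by metis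
      then show ?thesis using \<open>ys = y # zs\<close> by simp
    qed
  qed
qed

lemma subroot1: "subroot T V1 = lo"
  unfolding subroot_def
proof (rule the_equality)
  show "lo \<in> V1 \<and> (\<forall>w\<in>V1. \<forall>xs. is_path E xs \<and> hd xs = r \<and> last xs = w \<longrightarrow> lo \<in> set xs)"
    using lo_V1 path_cross r_V2 by auto
next
  fix v assume v: "v \<in> V1 \<and> (\<forall>w\<in>V1. \<forall>xs. is_path E xs \<and> hd xs = r \<and> last xs = w \<longrightarrow> v \<in> set xs)"
  obtain a where a: "{a, lo} = e" "a \<noteq> lo" "a \<in> V2" "lo \<in> V1" using ends by blast
  let ?F = "{g \<in> E - {e}. g \<subseteq> V2} \<union> {e}"
  have "(r, a) \<in> (adj ?F)\<^sup>*" using V2_conn[OF a(3)] rt_mono[of _ ?F] by blast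
  moreover have "(a, lo) \<in> adj ?F" using a(1) by (simp add: adj_def)
  ultimately have "(r, lo) \<in> (adj ?F)\<^sup>*" by simp
  then obtain xs where xs: "is_path ?F xs" "hd xs = r" "last xs = lo" "\<forall>z\<in>set xs. (r, z) \<in> (adj ?F)\<^sup>*"
    using walk_path by blast
  have reach: "(r, z) \<in> (adj ?F)\<^sup>* \<Longrightarrow> z \<in> V2 \<or> z = lo" for z
  proof (induction rule: rtrancl_induct)
    case base then show ?case using r_V2 by simp
  next
    case (step y z)
    have yz: "{y, z} \<in> ?F" using step(2) by (simp add: adj_def)
    then show ?case
    proof
      assume "{y, z} \<in> {g \<in> E - {e}. g \<subseteq> V2}" then show ?thesis by auto
    next
      assume "{y, z} \<in> {e}"
      then have "{y, z} = {a, lo}" using a(1) by simp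
      then show ?thesis using a step.IH lo_notV2 by (auto simp: doubleton_eq_iff)
    qed
  qed
  have "is_path E xs" using is_path_mono[OF _ xs(1)] eE by blast
  then have "v \<in> set xs" using v xs a by blast
  then have "v \<in> V2 \<or> v = lo" using xs(4) reach by blast
  then show "v = lo" using v V1_eq by blast
qed

lemma emb2: "embedding (cut_tree2 T e) T id"
  unfolding embedding_def using rtree2 rt V2_sub subroot_eq[OF rt r_V2]
  by (auto simp: img_edges_def)

lemma emb1: "embedding (cut_tree1 T e) T id"
  unfolding embedding_def using rtree1 rt V1_eq subroot1
  by (auto simp: img_edges_def)

end


lemma sub_V2:
  assumes rt: "is_rtree T" and rt': "is_rtree T'" and sv: "verts T' \<subseteq> verts T"
    and se: "edges T' \<subseteq> edges T" and fE': "f \<in> edges T'"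
    and rr: "root T' \<in> cut_verts2 T f"
  shows "cut_verts2 T' f = verts T' \<inter> cut_verts2 T f"
proof -
  have fE: "f \<in> edges T" using fE' se by blast
  interpret cf: cut T f by (rule cut.intro[OF rt fE])
  interpret cf': cut T' f by (rule cut.intro[OF rt' fE'])
  have sub: "cut_verts2 T' f \<subseteq> verts T' \<inter> cut_verts2 T f"
  proof
    fix w assume w: "w \<in> cut_verts2 T' f"
    then have wV: "w \<in> verts T'" "(root T', w) \<in> (adj (edges T' - {f}))\<^sup>*" using cf'.V2_iff by auto
    then have "(root T', w) \<in> (adj (edges T - {f}))\<^sup>*" using rt_mono[of "edges T' - {f}" "edges T - {f}"] se by blast
    moreover have "(root T, root T') \<in> (adj (edges T - {f}))\<^sup>*" using rr cf.V2_iff by blast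
    ultimately have "(root T, w) \<in> (adj (edges T - {f}))\<^sup>*" by simp
    then show "w \<in> verts T' \<inter> cut_verts2 T f" using wV sv cf.V2_iff by blast
  qed
  moreover have "verts T' \<inter> cut_verts2 T f \<subseteq> cut_verts2 T' f"
  proof
    fix w assume w: "w \<in> verts T' \<inter> cut_verts2 T f"
    show "w \<in> cut_verts2 T' f"
    proof (rule ccontr)
      assume "w \<notin> cut_verts2 T' f"
      then have "w \<in> cut_verts1 T' f" using w cf'.V1_iff by blast
      then have "(root (cut_tree1 T' f), w) \<in> (adj {g \<in> edges T' - {f}. g \<subseteq> cut_verts1 T' f})\<^sup>*"
        by (rule cf'.V1_conn)
      then have "(root (cut_tree1 T' f), w) \<in> (adj (edges T - {f}))\<^sup>*"
        using rt_mono[of "{g \<in> edges T' - {f}. g \<subseteq> cut_verts1 T' f}" "edges T - {f}"] se by blast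
      then have "(w, root (cut_tree1 T' f)) \<in> (adj (edges T - {f}))\<^sup>*" by (rule rt_sym)
      moreover have "(root T, w) \<in> (adj (edges T - {f}))\<^sup>*" using w cf.V2_iff by blast
      ultimately have "(root T, root (cut_tree1 T' f)) \<in> (adj (edges T - {f}))\<^sup>*" by simp
      moreover have "root (cut_tree1 T' f) \<in> verts T" using cf'.lo_V1 sv cf'.V1_iff by blast
      ultimately have lo'2: "root (cut_tree1 T' f) \<in> cut_verts2 T f" using cf.V2_iff by blast
      obtain a' where a': "{a', root (cut_tree1 T' f)} = f" "a' \<noteq> root (cut_tree1 T' f)"
        "a' \<in> cut_verts2 T' f" using cf'.ends by blast
      have a'2: "a' \<in> cut_verts2 T f" using a'(3) sub by blast
      obtain a where a: "{a, root (cut_tree1 T f)} = f" "a \<noteq> root (cut_tree1 T f)" using cf.ends by blast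
      have "root (cut_tree1 T f) \<notin> cut_verts2 T f" by (rule cf.lo_notV2)
      then have "a' \<noteq> root (cut_tree1 T f)" "root (cut_tree1 T' f) \<noteq> root (cut_tree1 T f)"
        using a'2 lo'2 by auto
      moreover have "root (cut_tree1 T f) \<in> {a', root (cut_tree1 T' f)}" using a'(1) cf.lo_e by simp
      ultimately show False by auto
    qed
  qed
  ultimately show ?thesis by blast
qed

locale pair =
  fixes T :: rtree and e f :: "nat set"
  assumes rt: "is_rtree T" and eE: "e \<in> edges T" and fE: "f \<in> edges T" and ef: "e \<noteq> f"
begin

sublocale ce: cut T e by (rule cut.intro[OF rt eE])
sublocale cf: cut T f by (rule cut.intro[OF rt fE])

lemma ne_f: "f \<noteq> {}" using rtreeD(3)[OF rt fE] by blast
lemma ne_e: "e \<noteq> {}" using rtreeD(3)[OF rt eE] by blast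

lemma disj12: "cut_verts1 T g \<inter> cut_verts2 T g = {}"
  by (auto simp: cut_verts1_def)

section \<open>f below e\<close>

lemma below_V2: "f \<subseteq> cut_verts1 T e \<Longrightarrow> cut_verts2 T e \<subseteq> cut_verts2 T f"
proof
  fix w assume f1: "f \<subseteq> cut_verts1 T e" and w: "w \<in> cut_verts2 T e"
  have "{g \<in> edges T - {e}. g \<subseteq> cut_verts2 T e} \<subseteq> edges T - {f}"
  proof
    fix g assume g: "g \<in> {g \<in> edges T - {e}. g \<subseteq> cut_verts2 T e}"
    have "g \<noteq> f"
    proof
      assume "g = f"
      then have "f \<subseteq> cut_verts1 T e \<inter> cut_verts2 T e" using g f1 by blast
      then show False using disj12[of e] ne_f by blast
    qed
    then show "g \<in> edges T - {f}" using g by blast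
  qed
  then have "(root T, w) \<in> (adj (edges T - {f}))\<^sup>*" using ce.V2_conn[OF w] rt_mono by blast
  then show "w \<in> cut_verts2 T f" using w ce.V2_sub cf.V2_iff by blast
qed

lemma below_e2: "f \<subseteq> cut_verts1 T e \<Longrightarrow> e \<subseteq> cut_verts2 T f"
proof -
  assume f1: "f \<subseteq> cut_verts1 T e"
  obtain a where a: "{a, root (cut_tree1 T e)} = e" "a \<in> cut_verts2 T e" using ce.ends by blast
  have a2: "a \<in> cut_verts2 T f" using a(2) below_V2[OF f1] by blast
  have "{root (cut_tree1 T e), a} \<in> edges T" "{root (cut_tree1 T e), a} \<noteq> f"
    using a(1) eE ef by (simp_all add: insert_commute)
  then have "root (cut_tree1 T e) \<in> cut_verts2 T f" using cf.closure a2 by blast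
  then have "{a, root (cut_tree1 T e)} \<subseteq> cut_verts2 T f" using a2 by simp
  then show ?thesis by (simp only: a(1))
qed

lemma below_V1: "f \<subseteq> cut_verts1 T e \<Longrightarrow> cut_verts1 T f \<subseteq> cut_verts1 T e"
  using below_V2 by (auto simp: cut_verts1_def)

lemma cut1_rt: "f \<subseteq> cut_verts1 T e \<Longrightarrow> cut T' f" if "T' = cut_tree1 T e"
proof -
  assume f1: "f \<subseteq> cut_verts1 T e"
  show ?thesis using ce.rtree1 f1 ef fE that by (intro cut.intro) auto
qed

lemma cut2_rt: "e \<subseteq> cut_verts2 T f \<Longrightarrow> cut T' e" if "T' = cut_tree2 T f"
proof -
  assume e2: "e \<subseteq> cut_verts2 T f"
  show ?thesis using cf.rtree2 e2 ef eE that by (intro cut.intro) auto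
qed

lemma V2_cut1: "f \<subseteq> cut_verts1 T e \<Longrightarrow> cut_verts2 (cut_tree1 T e) f = cut_verts1 T e \<inter> cut_verts2 T f"
proof -
  assume f1: "f \<subseteq> cut_verts1 T e"
  have "root (cut_tree1 T e) \<in> cut_verts2 T f" using below_e2[OF f1] ce.lo_e by blast
  moreover have "verts (cut_tree1 T e) \<subseteq> verts T" using ce.V1_eq by auto
  moreover have "f \<in> edges (cut_tree1 T e)" using f1 fE ef by auto
  ultimately show ?thesis using sub_V2[OF rt ce.rtree1] by simp
qed

lemma V1_cut1: "f \<subseteq> cut_verts1 T e \<Longrightarrow> cut_verts1 (cut_tree1 T e) f = cut_verts1 T f"
proof -
  assume f1: "f \<subseteq> cut_verts1 T e"
  have "cut_verts1 (cut_tree1 T e) f = cut_verts1 T e - cut_verts1 T e \<inter> cut_verts2 T f"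
    using V2_cut1[OF f1] by (simp add: cut_verts1_def[of "cut_tree1 T e"])
  also have "\<dots> = cut_verts1 T f" using below_V1[OF f1] cf.V1_eq ce.V1_eq by blast
  finally show ?thesis .
qed

lemma ident_a: "f \<subseteq> cut_verts1 T e \<Longrightarrow> cut_tree1 (cut_tree1 T e) f = cut_tree1 T f"
proof -
  assume f1: "f \<subseteq> cut_verts1 T e"
  have v: "cut_verts1 (cut_tree1 T e) f = cut_verts1 T f" by (rule V1_cut1[OF f1])
  have e2: "e \<subseteq> cut_verts2 T f" by (rule below_e2[OF f1])
  have "{g \<in> edges (cut_tree1 T e) - {f}. g \<subseteq> cut_verts1 T f} = {g \<in> edges T - {f}. g \<subseteq> cut_verts1 T f}"
  proof -
    have "g \<noteq> e" if "g \<subseteq> cut_verts1 T f" for g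
      using that e2 ne_e disj12[of f] by blast
    moreover have "g \<subseteq> cut_verts1 T e" if "g \<subseteq> cut_verts1 T f" for g
      using that below_V1[OF f1] by blast
    ultimately show ?thesis by auto
  qed
  then show ?thesis unfolding cut_tree1_def[of "cut_tree1 T e"] v by (simp add: cut_tree1_def)
qed

lemma V2_cut2: "e \<subseteq> cut_verts2 T f \<Longrightarrow> cut_verts2 (cut_tree2 T f) e = cut_verts2 T f \<inter> cut_verts2 T e"
proof -
  assume e2: "e \<subseteq> cut_verts2 T f"
  have "root (cut_tree2 T f) \<in> cut_verts2 T e" using ce.r_V2 by simp
  moreover have "verts (cut_tree2 T f) \<subseteq> verts T" using cf.V2_sub by auto
  moreover have "e \<in> edges (cut_tree2 T f)" using e2 eE ef by auto
  ultimately show ?thesis using sub_V2[OF rt cf.rtree2] by simp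
qed

lemma ident_b: "f \<subseteq> cut_verts1 T e \<Longrightarrow> cut_tree2 (cut_tree1 T e) f = cut_tree1 (cut_tree2 T f) e"
proof -
  assume f1: "f \<subseteq> cut_verts1 T e"
  have e2: "e \<subseteq> cut_verts2 T f" by (rule below_e2[OF f1])
  have s2: "cut_verts2 T e \<subseteq> cut_verts2 T f" by (rule below_V2[OF f1])
  have vl: "cut_verts2 (cut_tree1 T e) f = cut_verts1 T e \<inter> cut_verts2 T f" by (rule V2_cut1[OF f1])
  have vr: "cut_verts1 (cut_tree2 T f) e = cut_verts1 T e \<inter> cut_verts2 T f"
    using V2_cut2[OF e2] s2 cf.V2_sub by (auto simp: cut_verts1_def[of "cut_tree2 T f"] cut_verts1_def[of T])
  interpret c2: cut "cut_tree2 T f" e by (rule cut2_rt[OF refl e2])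
  have lo: "root (cut_tree1 T e) \<in> cut_verts1 (cut_tree2 T f) e"
    using vr ce.lo_V1 ce.lo_e e2 by blast
  have root: "root (cut_tree1 (cut_tree2 T f) e) = root (cut_tree1 T e)"
    by (rule c2.lo_eq[OF ce.lo_e lo])
  have ed: "{g \<in> edges (cut_tree1 T e) - {f}. g \<subseteq> cut_verts1 T e \<inter> cut_verts2 T f}
      = {g \<in> edges (cut_tree2 T f) - {e}. g \<subseteq> cut_verts1 T e \<inter> cut_verts2 T f}"
    by auto
  have "cut_tree2 (cut_tree1 T e) f = (cut_verts1 T e \<inter> cut_verts2 T f,
     {g \<in> edges (cut_tree1 T e) - {f}. g \<subseteq> cut_verts1 T e \<inter> cut_verts2 T f}, root (cut_tree1 T e))"
    unfolding cut_tree2_def[of "cut_tree1 T e"] vl by simp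
  also have "\<dots> = cut_tree1 (cut_tree2 T f) e"
    using root unfolding ed cut_tree1_def[of "cut_tree2 T f"] vr
    by (simp add: root_def[of "(_, _, _)"])
  finally show ?thesis .
qed

lemma ident_c: "f \<subseteq> cut_verts1 T e \<Longrightarrow> cut_tree2 (cut_tree2 T f) e = cut_tree2 T e"
proof -
  assume f1: "f \<subseteq> cut_verts1 T e"
  have e2: "e \<subseteq> cut_verts2 T f" by (rule below_e2[OF f1])
  have s2: "cut_verts2 T e \<subseteq> cut_verts2 T f" by (rule below_V2[OF f1])
  have v: "cut_verts2 (cut_tree2 T f) e = cut_verts2 T e" using V2_cut2[OF e2] s2 by blast
  have nf: "\<not> f \<subseteq> cut_verts2 T e" using f1 ne_f disj12[of e] by blast
  have "{g \<in> edges (cut_tree2 T f) - {e}. g \<subseteq> cut_verts2 T e} = {g \<in> edges T - {e}. g \<subseteq> cut_verts2 T e}"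
    using s2 nf by auto
  then show ?thesis unfolding cut_tree2_def[of "cut_tree2 T f"] v
    by (simp add: cut_tree2_def root_def)
qed

section \<open>incomparable\<close>

lemma inc_V1: "e \<subseteq> cut_verts2 T f \<Longrightarrow> f \<subseteq> cut_verts2 T e \<Longrightarrow> cut_verts1 T f \<subseteq> cut_verts2 T e"
proof
  fix x assume e2: "e \<subseteq> cut_verts2 T f" and f2: "f \<subseteq> cut_verts2 T e" and x: "x \<in> cut_verts1 T f"
  have "(root (cut_tree1 T f), x) \<in> (adj {g \<in> edges T - {f}. g \<subseteq> cut_verts1 T f})\<^sup>*"
    by (rule cf.V1_conn[OF x])
  then show "x \<in> cut_verts2 T e"
  proof (induction rule: rtrancl_induct)
    case base then show ?case using cf.lo_e f2 by blast
  next
    case (step y z)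
    have yz: "{y, z} \<in> edges T - {f}" "{y, z} \<subseteq> cut_verts1 T f" using step(2) by (auto simp: adj_def)
    have "{y, z} \<noteq> e" using yz(2) e2 ne_e disj12[of f] by blast
    moreover have "{z, y} = {y, z}" by (rule insert_commute)
    ultimately show ?case using ce.closure[of z y] yz(1) step.IH by simp
  qed
qed

lemma V2_cut2': "f \<subseteq> cut_verts2 T e \<Longrightarrow> cut_verts2 (cut_tree2 T e) f = cut_verts2 T e \<inter> cut_verts2 T f"
proof -
  assume f2: "f \<subseteq> cut_verts2 T e"
  have "root (cut_tree2 T e) \<in> cut_verts2 T f" using cf.r_V2 by simp
  moreover have "verts (cut_tree2 T e) \<subseteq> verts T" using ce.V2_sub by auto
  moreover have "f \<in> edges (cut_tree2 T e)" using f2 fE ef by auto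
  ultimately show ?thesis using sub_V2[OF rt ce.rtree2] by simp
qed

lemma ident_d: "e \<subseteq> cut_verts2 T f \<Longrightarrow> f \<subseteq> cut_verts2 T e \<Longrightarrow> cut_tree1 (cut_tree2 T e) f = cut_tree1 T f"
proof -
  assume e2: "e \<subseteq> cut_verts2 T f" and f2: "f \<subseteq> cut_verts2 T e"
  have s: "cut_verts1 T f \<subseteq> cut_verts2 T e" by (rule inc_V1[OF e2 f2])
  have v: "cut_verts1 (cut_tree2 T e) f = cut_verts1 T f"
    using V2_cut2'[OF f2] s ce.V2_sub
    by (auto simp: cut_verts1_def[of "cut_tree2 T e"] cut_verts1_def[of T])
  have "{g \<in> edges (cut_tree2 T e) - {f}. g \<subseteq> cut_verts1 T f} = {g \<in> edges T - {f}. g \<subseteq> cut_verts1 T f}"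
  proof -
    have "g \<noteq> e" if "g \<subseteq> cut_verts1 T f" for g
      using that e2 ne_e disj12[of f] by blast
    then show ?thesis using s by auto
  qed
  then show ?thesis unfolding cut_tree1_def[of "cut_tree2 T e"] v by (simp add: cut_tree1_def)
qed

lemma cc2: "f \<subseteq> cut_verts2 T e \<Longrightarrow> cut_tree2 (cut_tree2 T e) f =
   (cut_verts2 T e \<inter> cut_verts2 T f, {g \<in> edges T. g \<noteq> e \<and> g \<noteq> f \<and> g \<subseteq> cut_verts2 T e \<inter> cut_verts2 T f}, root T)"
proof -
  assume f2: "f \<subseteq> cut_verts2 T e"
  show ?thesis unfolding cut_tree2_def[of "cut_tree2 T e"] V2_cut2'[OF f2]
    by (auto simp: cut_tree2_def root_def edges_def)
qed

end

lemma pair_sym: "pair T e f \<Longrightarrow> pair T f e"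
  unfolding pair_def by auto

lemma ident_e:
  assumes "pair T e f" "e \<subseteq> cut_verts2 T f" "f \<subseteq> cut_verts2 T e"
  shows "cut_tree2 (cut_tree2 T e) f = cut_tree2 (cut_tree2 T f) e"
  using pair.cc2[OF assms(1) assms(3)] pair.cc2[OF pair_sym[OF assms(1)] assms(2)]
  by (auto simp: Int_commute conj_commute)


section \<open>Homeomorphisms\<close>

lemma edges_Pow: "is_rtree T \<Longrightarrow> edges T \<subseteq> Pow (verts T)"
  using edge_sub by blast

lemma inj_img_sub:
  assumes "inj_on j V" "A \<subseteq> V" "B \<subseteq> V" "j ` A \<subseteq> j ` B" shows "A \<subseteq> B"
proof
  fix x assume x: "x \<in> A"
  then obtain y where "y \<in> B" "j x = j y" using assms(4) by blast
  then show "x \<in> B" using assms(1-3) x by (metis inj_onD subsetD)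
qed

lemma rhomeo_emb: "rhomeo T T2 j \<Longrightarrow> embedding T T2 j"
proof -
  assume h: "rhomeo T T2 j"
  then have rt2: "is_rtree T2" by (simp add: rhomeo_def)
  have "subroot T2 (verts T2) = root T2" using subroot_eq[OF rt2 rtreeD(2)[OF rt2]] .
  then show ?thesis using h unfolding rhomeo_def embedding_def by (auto simp: bij_betw_def)
qed

lemma img_edges_comp: "img_edges (k \<circ> j) E = img_edges k (img_edges j E)"
  unfolding img_edges_def image_image by (simp add: image_comp)

lemma rhomeo_id: "is_rtree T \<Longrightarrow> rhomeo T T id"
  unfolding rhomeo_def by (auto simp: img_edges_def)

lemma rhomeo_comp: "rhomeo T T2 j \<Longrightarrow> rhomeo T2 T3 k \<Longrightarrow> rhomeo T T3 (k \<circ> j)"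
  unfolding rhomeo_def img_edges_comp
  by (auto simp: bij_betw_trans)

lemma rhomeo_inv:
  assumes h: "rhomeo T T2 j"
  shows "rhomeo T2 T (inv_into (verts T) j)"
proof -
  have rt: "is_rtree T" "is_rtree T2" and b: "bij_betw j (verts T) (verts T2)"
    and ed: "img_edges j (edges T) = edges T2" and ro: "j (root T) = root T2"
    using h by (auto simp: rhomeo_def)
  have inj: "inj_on j (verts T)" using b by (simp add: bij_betw_def)
  have "img_edges (inv_into (verts T) j) (edges T2) = edges T"
  proof -
    have "img_edges (inv_into (verts T) j) (edges T2) = (\<lambda>g. inv_into (verts T) j ` j ` g) ` edges T"
      using ed[symmetric] by (simp add: img_edges_def image_comp)
    also have "\<dots> = (\<lambda>g. g) ` edges T"
    proof (rule image_cong[OF refl])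
      fix g assume "g \<in> edges T"
      then show "inv_into (verts T) j ` j ` g = g" using inv_into_image_cancel[OF inj edge_sub[OF rt(1)]] by blast
    qed
    finally show ?thesis by simp
  qed
  moreover have "inv_into (verts T) j (root T2) = root T"
  proof -
    have "inv_into (verts T) j (j (root T)) = root T" by (rule inv_into_f_f[OF inj rtreeD(2)[OF rt(1)]])
    then show ?thesis using ro by simp
  qed
  ultimately show ?thesis using rt bij_betw_inv_into[OF b] by (simp add: rhomeo_def)
qed

lemma walk_map: "(u, w) \<in> (adj F)\<^sup>* \<Longrightarrow> (j u, j w) \<in> (adj (img_edges j F))\<^sup>*"
proof (induction rule: rtrancl_induct)
  case base then show ?case by simp
next
  case (step y z)
  have "{y, z} \<in> F" using step(2) by (simp add: adj_def)
  then have "j ` {y, z} \<in> img_edges j F" unfolding img_edges_def by (rule imageI)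
  then have "(j y, j z) \<in> adj (img_edges j F)" by (simp add: adj_def)
  then show ?case using step.IH by (meson rtrancl_into_rtrancl)
qed

lemma img_edges_diff:
  assumes "inj_on j V" "E \<subseteq> Pow V" "e \<in> E"
  shows "img_edges j (E - {e}) = img_edges j E - {j ` e}"
proof -
  have "inj_on (image j) E" using inj_on_image_Pow[OF assms(1)] assms(2) inj_on_subset by blast
  then show ?thesis unfolding img_edges_def using assms(3) by (simp add: inj_on_image_set_diff)
qed

lemma img_edges_restr:
  assumes "inj_on j V" "E \<subseteq> Pow V" "e \<in> E" "S \<subseteq> V"
  shows "img_edges j {g \<in> E - {e}. g \<subseteq> S} = {g \<in> img_edges j E - {j ` e}. g \<subseteq> j ` S}"
proof
  have injE: "inj_on (image j) E" using inj_on_image_Pow[OF assms(1)] assms(2) inj_on_subset by blast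
  show "img_edges j {g \<in> E - {e}. g \<subseteq> S} \<subseteq> {g \<in> img_edges j E - {j ` e}. g \<subseteq> j ` S}"
  proof
    fix g' assume "g' \<in> img_edges j {g \<in> E - {e}. g \<subseteq> S}"
    then obtain g where g: "g \<in> E" "g \<noteq> e" "g \<subseteq> S" "g' = j ` g" by (auto simp: img_edges_def)
    have "j ` g \<noteq> j ` e" using injE g(1,2) assms(3) by (meson inj_onD)
    then show "g' \<in> {g \<in> img_edges j E - {j ` e}. g \<subseteq> j ` S}" using g by (auto simp: img_edges_def)
  qed
  show "{g \<in> img_edges j E - {j ` e}. g \<subseteq> j ` S} \<subseteq> img_edges j {g \<in> E - {e}. g \<subseteq> S}"
  proof
    fix g' assume g': "g' \<in> {g \<in> img_edges j E - {j ` e}. g \<subseteq> j ` S}"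
    then obtain g where g: "g \<in> E" "g' = j ` g" by (auto simp: img_edges_def)
    have "g \<noteq> e" using g g' by auto
    moreover have "g \<subseteq> S" using inj_img_sub[OF assms(1) _ assms(4)] g g' assms(2) by blast
    ultimately show "g' \<in> img_edges j {g \<in> E - {e}. g \<subseteq> S}" using g by (auto simp: img_edges_def)
  qed
qed

lemma rhomeo_V2_sub:
  assumes h: "rhomeo T T2 j" and eE: "e \<in> edges T"
  shows "j ` cut_verts2 T e \<subseteq> cut_verts2 T2 (j ` e)"
proof
  fix w' assume "w' \<in> j ` cut_verts2 T e"
  then obtain w where w: "w \<in> cut_verts2 T e" "w' = j w" by blast
  have rt: "is_rtree T" and b: "bij_betw j (verts T) (verts T2)"
    and ed: "img_edges j (edges T) = edges T2" and ro: "j (root T) = root T2"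
    using h by (auto simp: rhomeo_def)
  have inj: "inj_on j (verts T)" using b by (simp add: bij_betw_def)
  have "(root T, w) \<in> (adj (edges T - {e}))\<^sup>*" "w \<in> verts T" using w by (auto simp: cut_verts2_def)
  then have "(j (root T), j w) \<in> (adj (img_edges j (edges T - {e})))\<^sup>*" "j w \<in> verts T2"
    using walk_map b by (auto simp: bij_betw_def)
  moreover have "img_edges j (edges T - {e}) = edges T2 - {j ` e}"
    using img_edges_diff[OF inj edges_Pow[OF rt] eE] ed by simp
  ultimately show "w' \<in> cut_verts2 T2 (j ` e)" using w ro by (simp add: cut_verts2_def)
qed

lemma rhomeo_V2:
  assumes h: "rhomeo T T2 j" and eE: "e \<in> edges T"
  shows "cut_verts2 T2 (j ` e) = j ` cut_verts2 T e"
proof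
  show "j ` cut_verts2 T e \<subseteq> cut_verts2 T2 (j ` e)" by (rule rhomeo_V2_sub[OF h eE])
  have rt: "is_rtree T" and b: "bij_betw j (verts T) (verts T2)"
    and ed: "img_edges j (edges T) = edges T2"
    using h by (auto simp: rhomeo_def)
  have inj: "inj_on j (verts T)" using b by (simp add: bij_betw_def)
  let ?i = "inv_into (verts T) j"
  have hi: "rhomeo T2 T ?i" by (rule rhomeo_inv[OF h])
  have e2: "j ` e \<in> edges T2" using ed eE by (auto simp: img_edges_def)
  have eV: "e \<subseteq> verts T" using edge_sub[OF rt eE] .
  have "?i ` cut_verts2 T2 (j ` e) \<subseteq> cut_verts2 T (?i ` j ` e)" by (rule rhomeo_V2_sub[OF hi e2])
  also have "?i ` j ` e = e" using inj eV by simp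
  finally have sub: "?i ` cut_verts2 T2 (j ` e) \<subseteq> cut_verts2 T e" .
  show "cut_verts2 T2 (j ` e) \<subseteq> j ` cut_verts2 T e"
  proof
    fix w assume w: "w \<in> cut_verts2 T2 (j ` e)"
    then have "w \<in> j ` verts T" using b by (auto simp: cut_verts2_def bij_betw_def)
    then have "w = j (?i w)" by (simp add: f_inv_into_f)
    moreover have "?i w \<in> cut_verts2 T e" using sub w by blast
    ultimately show "w \<in> j ` cut_verts2 T e" by blast
  qed
qed

lemma rhomeo_cut:
  assumes h: "rhomeo T T2 j" and eE: "e \<in> edges T"
  shows "rhomeo (cut_tree1 T e) (cut_tree1 T2 (j ` e)) j"
    "rhomeo (cut_tree2 T e) (cut_tree2 T2 (j ` e)) j"
proof -
  have rt: "is_rtree T" and rt2: "is_rtree T2" and b: "bij_betw j (verts T) (verts T2)"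
    and ed: "img_edges j (edges T) = edges T2" and ro: "j (root T) = root T2"
    using h by (auto simp: rhomeo_def)
  have inj: "inj_on j (verts T)" using b by (simp add: bij_betw_def)
  have e2: "j ` e \<in> edges T2" using ed eE by (auto simp: img_edges_def)
  interpret c: cut T e by (rule cut.intro[OF rt eE])
  interpret c2: cut T2 "j ` e" by (rule cut.intro[OF rt2 e2])
  have V2: "cut_verts2 T2 (j ` e) = j ` cut_verts2 T e" by (rule rhomeo_V2[OF h eE])
  have V1: "cut_verts1 T2 (j ` e) = j ` cut_verts1 T e"
    using V2 b c.V2_sub by (simp add: cut_verts1_def bij_betw_def inj_on_image_set_diff[OF inj])
  have V1s: "cut_verts1 T e \<subseteq> verts T" by (auto simp: cut_verts1_def)
  have lo: "j (root (cut_tree1 T e)) = root (cut_tree1 T2 (j ` e))"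
  proof -
    have "j (root (cut_tree1 T e)) \<in> j ` e" using c.lo_e by blast
    moreover have "j (root (cut_tree1 T e)) \<in> cut_verts1 T2 (j ` e)" using V1 c.lo_V1 by blast
    ultimately show ?thesis using c2.lo_eq by metis
  qed
  show "rhomeo (cut_tree1 T e) (cut_tree1 T2 (j ` e)) j"
    unfolding rhomeo_def
  proof (intro conjI)
    show "bij_betw j (verts (cut_tree1 T e)) (verts (cut_tree1 T2 (j ` e)))"
      using bij_betw_subset[OF b V1s] V1 by simp
    show "img_edges j (edges (cut_tree1 T e)) = edges (cut_tree1 T2 (j ` e))"
      using img_edges_restr[OF inj edges_Pow[OF rt] eE V1s] ed V1 by simp
    show "is_rtree (cut_tree1 T e)" by (rule c.rtree1)
    show "is_rtree (cut_tree1 T2 (j ` e))" by (rule c2.rtree1)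
    show "j (root (cut_tree1 T e)) = root (cut_tree1 T2 (j ` e))" by (rule lo)
  qed
  show "rhomeo (cut_tree2 T e) (cut_tree2 T2 (j ` e)) j"
    unfolding rhomeo_def
  proof (intro conjI)
    show "bij_betw j (verts (cut_tree2 T e)) (verts (cut_tree2 T2 (j ` e)))"
      using bij_betw_subset[OF b c.V2_sub] V2 by simp
    show "img_edges j (edges (cut_tree2 T e)) = edges (cut_tree2 T2 (j ` e))"
      using img_edges_restr[OF inj edges_Pow[OF rt] eE c.V2_sub] ed V2 by simp
    show "is_rtree (cut_tree2 T e)" by (rule c.rtree2)
    show "is_rtree (cut_tree2 T2 (j ` e))" by (rule c2.rtree2)
    show "j (root (cut_tree2 T e)) = root (cut_tree2 T2 (j ` e))" using ro by simp
  qed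
qed


locale rs =
  fixes phi :: "rtree \<Rightarrow> 'a set" and phimap :: "rtree \<Rightarrow> rtree \<Rightarrow> (nat \<Rightarrow> nat) \<Rightarrow> 'a \<Rightarrow> 'a"
  assumes str: "rtree_structure phi phimap"
begin

lemma F1: "embedding T' T f \<Longrightarrow> s \<in> phi T \<Longrightarrow> phimap T' T f s \<in> phi T'"
  using str unfolding rtree_structure_def by blast
lemma F2: "embedding T' T f \<Longrightarrow> (\<forall>v\<in>verts T'. f v = g v) \<Longrightarrow> s \<in> phi T \<Longrightarrow> phimap T' T f s = phimap T' T g s"
  using str unfolding rtree_structure_def by blast
lemma F3: "is_rtree T \<Longrightarrow> s \<in> phi T \<Longrightarrow> phimap T T id s = s"
  using str unfolding rtree_structure_def by blast
lemma F4: "embedding T1 T2 f \<Longrightarrow> embedding T2 T3 g \<Longrightarrow> s \<in> phi T3 \<Longrightarrow>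
    phimap T1 T3 (g \<circ> f) s = phimap T1 T2 f (phimap T2 T3 g s)"
  using str unfolding rtree_structure_def by blast

lemma restr_phi1: "is_rtree T \<Longrightarrow> e \<in> edges T \<Longrightarrow> s \<in> phi T \<Longrightarrow> restr phimap T (cut_tree1 T e) s \<in> phi (cut_tree1 T e)"
  unfolding restr_def using F1 cut.emb1 cut.intro by blast
lemma restr_phi2: "is_rtree T \<Longrightarrow> e \<in> edges T \<Longrightarrow> s \<in> phi T \<Longrightarrow> restr phimap T (cut_tree2 T e) s \<in> phi (cut_tree2 T e)"
  unfolding restr_def using F1 cut.emb2 cut.intro by blast

lemma restr_restr: "embedding Y X id \<Longrightarrow> embedding X T id \<Longrightarrow> s \<in> phi T \<Longrightarrow>
   restr phimap X Y (restr phimap T X s) = restr phimap T Y s"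
  unfolding restr_def using F4[of Y X id T id s] by simp

lemma rclass_refl: "is_rtree T \<Longrightarrow> s \<in> phi T \<Longrightarrow> (T, s) \<in> rclass phi phimap T s"
  unfolding rclass_def using rhomeo_id F3 by blast

lemma rclass_eq:
  assumes A: "is_rtree A" "a \<in> phi A" and Bm: "(B, b) \<in> rclass phi phimap A a"
  shows "rclass phi phimap B b = rclass phi phimap A a"
proof -
  obtain j where b: "b \<in> phi B" "rhomeo A B j" "phimap A B j b = a" using Bm unfolding rclass_def by blast
  have rtB: "is_rtree B" using b(2) by (simp add: rhomeo_def)
  show ?thesis
  proof
    show "rclass phi phimap B b \<subseteq> rclass phi phimap A a"
    proof
      fix p assume "p \<in> rclass phi phimap B b"
      then obtain C c k where p: "p = (C, c)" "c \<in> phi C" "rhomeo B C k" "phimap B C k c = b"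
        unfolding rclass_def by blast
      have "rhomeo A C (k \<circ> j)" using rhomeo_comp b(2) p(3) by blast
      moreover have "phimap A C (k \<circ> j) c = a"
        using F4[OF rhomeo_emb[OF b(2)] rhomeo_emb[OF p(3)] p(2)] p(4) b(3) by simp
      ultimately show "p \<in> rclass phi phimap A a" using p unfolding rclass_def by blast
    qed
    show "rclass phi phimap A a \<subseteq> rclass phi phimap B b"
    proof
      fix p assume "p \<in> rclass phi phimap A a"
      then obtain C c k where p: "p = (C, c)" "c \<in> phi C" "rhomeo A C k" "phimap A C k c = a"
        unfolding rclass_def by blast
      let ?i = "inv_into (verts A) j"
      have hi: "rhomeo B A ?i" by (rule rhomeo_inv[OF b(2)])
      have "rhomeo B C (k \<circ> ?i)" using rhomeo_comp hi p(3) by blast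
      moreover have "phimap B C (k \<circ> ?i) c = b"
      proof -
        have "phimap B C (k \<circ> ?i) c = phimap B A ?i a"
          using F4[OF rhomeo_emb[OF hi] rhomeo_emb[OF p(3)] p(2)] p(4) by simp
        also have "\<dots> = phimap B A ?i (phimap A B j b)" using b(3) by simp
        also have "\<dots> = phimap B B (j \<circ> ?i) b"
          using F4[OF rhomeo_emb[OF hi] rhomeo_emb[OF b(2)] b(1)] by simp
        also have "\<dots> = phimap B B id b"
        proof (rule F2[OF _ _ b(1)])
          show "embedding B B (j \<circ> ?i)" using rhomeo_emb rhomeo_comp[OF hi b(2)] by blast
          have "verts B = j ` verts A" using b(2) by (simp add: rhomeo_def bij_betw_def)
          then show "\<forall>v\<in>verts B. (j \<circ> ?i) v = id v" by (simp add: f_inv_into_f)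
        qed
        also have "\<dots> = b" using F3[OF rtB b(1)] .
        finally show ?thesis .
      qed
      ultimately show "p \<in> rclass phi phimap B b" using p unfolding rclass_def by blast
    qed
  qed
qed

lemma cut_class:
  assumes h: "rhomeo T T2 j" and s2: "s2 \<in> phi T2" and s: "phimap T T2 j s2 = s" and eE: "e \<in> edges T"
  shows "rclass phi phimap (cut_tree1 T2 (j ` e)) (restr phimap T2 (cut_tree1 T2 (j ` e)) s2)
       = rclass phi phimap (cut_tree1 T e) (restr phimap T (cut_tree1 T e) s)"
    "rclass phi phimap (cut_tree2 T2 (j ` e)) (restr phimap T2 (cut_tree2 T2 (j ` e)) s2)
       = rclass phi phimap (cut_tree2 T e) (restr phimap T (cut_tree2 T e) s)"
proof -
  have rt: "is_rtree T" and rt2: "is_rtree T2" and ed: "img_edges j (edges T) = edges T2"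
    using h by (auto simp: rhomeo_def)
  have e2: "j ` e \<in> edges T2" using ed eE by (auto simp: img_edges_def)
  interpret c: cut T e by (rule cut.intro[OF rt eE])
  interpret c2: cut T2 "j ` e" by (rule cut.intro[OF rt2 e2])
  have sT: "s \<in> phi T" using F1[OF rhomeo_emb[OF h] s2] s by simp
  have emb: "embedding T T2 j" by (rule rhomeo_emb[OF h])
  show "rclass phi phimap (cut_tree1 T2 (j ` e)) (restr phimap T2 (cut_tree1 T2 (j ` e)) s2)
       = rclass phi phimap (cut_tree1 T e) (restr phimap T (cut_tree1 T e) s)"
  proof (rule rclass_eq)
    show "is_rtree (cut_tree1 T e)" by (rule c.rtree1)
    show "restr phimap T (cut_tree1 T e) s \<in> phi (cut_tree1 T e)" by (rule restr_phi1[OF rt eE sT])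
    have hc: "rhomeo (cut_tree1 T e) (cut_tree1 T2 (j ` e)) j" by (rule rhomeo_cut(1)[OF h eE])
    have "phimap (cut_tree1 T e) (cut_tree1 T2 (j ` e)) j (restr phimap T2 (cut_tree1 T2 (j ` e)) s2)
        = phimap (cut_tree1 T e) T2 (id \<circ> j) s2"
      unfolding restr_def using F4[OF rhomeo_emb[OF hc] c2.emb1 s2] by simp
    also have "\<dots> = phimap (cut_tree1 T e) T2 (j \<circ> id) s2" by simp
    also have "\<dots> = restr phimap T (cut_tree1 T e) s"
      unfolding restr_def using F4[OF c.emb1 emb s2] s by simp
    finally show "(cut_tree1 T2 (j ` e), restr phimap T2 (cut_tree1 T2 (j ` e)) s2)
        \<in> rclass phi phimap (cut_tree1 T e) (restr phimap T (cut_tree1 T e) s)"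
      unfolding rclass_def using hc restr_phi1[OF rt2 e2 s2] by blast
  qed
  show "rclass phi phimap (cut_tree2 T2 (j ` e)) (restr phimap T2 (cut_tree2 T2 (j ` e)) s2)
       = rclass phi phimap (cut_tree2 T e) (restr phimap T (cut_tree2 T e) s)"
  proof (rule rclass_eq)
    show "is_rtree (cut_tree2 T e)" by (rule c.rtree2)
    show "restr phimap T (cut_tree2 T e) s \<in> phi (cut_tree2 T e)" by (rule restr_phi2[OF rt eE sT])
    have hc: "rhomeo (cut_tree2 T e) (cut_tree2 T2 (j ` e)) j" by (rule rhomeo_cut(2)[OF h eE])
    have "phimap (cut_tree2 T e) (cut_tree2 T2 (j ` e)) j (restr phimap T2 (cut_tree2 T2 (j ` e)) s2)
        = phimap (cut_tree2 T e) T2 (id \<circ> j) s2"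
      unfolding restr_def using F4[OF rhomeo_emb[OF hc] c2.emb2 s2] by simp
    also have "\<dots> = phimap (cut_tree2 T e) T2 (j \<circ> id) s2" by simp
    also have "\<dots> = restr phimap T (cut_tree2 T e) s"
      unfolding restr_def using F4[OF c.emb2 emb s2] s by simp
    finally show "(cut_tree2 T2 (j ` e), restr phimap T2 (cut_tree2 T2 (j ` e)) s2)
        \<in> rclass phi phimap (cut_tree2 T e) (restr phimap T (cut_tree2 T e) s)"
      unfolding rclass_def using hc restr_phi2[OF rt2 e2 s2] by blast
  qed
qed

lemma rho_inv:
  assumes rt: "is_rtree T" and sT: "s \<in> phi T" and m: "(T2, s2) \<in> rclass phi phimap T s"
  shows "(rho_gen phi phimap T2 s2 :: _ \<Rightarrow> 'r::comm_ring_1) = rho_gen phi phimap T s"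
proof -
  obtain j where j: "s2 \<in> phi T2" "rhomeo T T2 j" "phimap T T2 j s2 = s" using m unfolding rclass_def by blast
  have ed: "edges T2 = (\<lambda>g. j ` g) ` edges T" using j(2) by (simp add: rhomeo_def img_edges_def)
  have inj: "inj_on j (verts T)" using j(2) by (simp add: rhomeo_def bij_betw_def)
  have injE: "inj_on (\<lambda>g. j ` g) (edges T)"
    using inj_on_image_Pow[OF inj] edges_Pow[OF rt] inj_on_subset by blast
  show ?thesis
    unfolding rho_gen_def ed sum.reindex[OF injE] o_def
    using cut_class[OF j(2) j(1) j(3)] by simp
qed

end


definition supp :: "('b \<Rightarrow> 'r::zero) \<Rightarrow> 'b set" where "supp x = {b. x b \<noteq> 0}"

lemma sum_fun_apply: "(\<Sum>i\<in>I. g i) x = (\<Sum>i\<in>I. g i x)"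
proof (cases "finite I")
  case True then show ?thesis by (induction rule: finite_induct) auto
next
  case False then show ?thesis by simp
qed

lemma lin_sup:
  fixes x :: "'b \<Rightarrow> 'r::comm_ring_1"
  assumes "finite S" "supp x \<subseteq> S"
  shows "lin f x c = (\<Sum>b\<in>S. x b * f b c)"
  unfolding lin_def
  by (rule sum.mono_neutral_left) (use assms in \<open>auto simp: supp_def\<close>)

lemma lin_comb:
  fixes g :: "'i \<Rightarrow> 'b \<Rightarrow> 'r::comm_ring_1"
  assumes I: "finite I" and fin: "\<And>i. i \<in> I \<Longrightarrow> finite (supp (g i))"
  shows "lin f (\<lambda>b. \<Sum>i\<in>I. k i * g i b) = (\<lambda>c. \<Sum>i\<in>I. k i * lin f (g i) c)"
proof
  fix c
  let ?S = "\<Union>i\<in>I. supp (g i)"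
  have fS: "finite ?S" using I fin by blast
  have s1: "supp (\<lambda>b. \<Sum>i\<in>I. k i * g i b) \<subseteq> ?S"
  proof
    fix b assume b: "b \<in> supp (\<lambda>b. \<Sum>i\<in>I. k i * g i b)"
    show "b \<in> ?S"
    proof (rule ccontr)
      assume "b \<notin> ?S"
      then have "\<forall>i\<in>I. g i b = 0" by (auto simp: supp_def)
      then show False using b by (simp add: supp_def)
    qed
  qed
  have "lin f (\<lambda>b. \<Sum>i\<in>I. k i * g i b) c = (\<Sum>b\<in>?S. (\<Sum>i\<in>I. k i * g i b) * f b c)"
    by (rule lin_sup[OF fS s1])
  also have "\<dots> = (\<Sum>b\<in>?S. \<Sum>i\<in>I. k i * (g i b * f b c))"
    by (simp add: sum_distrib_right mult.assoc)
  also have "\<dots> = (\<Sum>i\<in>I. \<Sum>b\<in>?S. k i * (g i b * f b c))" by (rule sum.swap)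
  also have "\<dots> = (\<Sum>i\<in>I. k i * (\<Sum>b\<in>?S. g i b * f b c))" by (simp add: sum_distrib_left)
  also have "\<dots> = (\<Sum>i\<in>I. k i * lin f (g i) c)"
  proof (rule sum.cong[OF refl])
    fix i assume i: "i \<in> I"
    have "supp (g i) \<subseteq> ?S" using i by blast
    then show "k i * (\<Sum>b\<in>?S. g i b * f b c) = k i * lin f (g i) c"
      using lin_sup[OF fS] by metis
  qed
  finally show "lin f (\<lambda>b. \<Sum>i\<in>I. k i * g i b) c = (\<Sum>i\<in>I. k i * lin f (g i) c)" .
qed

lemma lin_delta: "lin f (delta b :: _ \<Rightarrow> 'r::comm_ring_1) = f b"
proof
  fix c
  show "lin f (delta b) c = f b c"
  proof (cases "(1::'r) = 0")
    case True
    then have "f b c = 0" by (metis mult_1 mult_zero_left)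
    moreover have "lin f (delta b) c = 0" using True by (simp add: lin_def delta_def)
    ultimately show ?thesis by simp
  next
    case False
    then have "{b'. (delta b :: _ \<Rightarrow> 'r) b' \<noteq> 0} = {b}" by (auto simp: delta_def)
    then show ?thesis by (simp add: lin_def delta_def)
  qed
qed

lemma supp_delta: "supp (delta b :: _ \<Rightarrow> 'r::comm_ring_1) \<subseteq> {b}"
  by (auto simp: supp_def delta_def)

lemma fin_supp_delta: "finite (supp (delta b :: _ \<Rightarrow> 'r::comm_ring_1))"
  using supp_delta[of b] finite_subset by (metis finite.emptyI finite.insertI)

lemma supp_sum: "supp (\<lambda>q. \<Sum>i\<in>I. g i q) \<subseteq> (\<Union>i\<in>I. supp (g i))"
proof
  fix q assume q: "q \<in> supp (\<lambda>q. \<Sum>i\<in>I. g i q)"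
  show "q \<in> (\<Union>i\<in>I. supp (g i))"
  proof (rule ccontr)
    assume "q \<notin> (\<Union>i\<in>I. supp (g i))"
    then have "\<forall>i\<in>I. g i q = 0" by (auto simp: supp_def)
    then show False using q by (simp add: supp_def)
  qed
qed

lemma fin_supp_sum_delta:
  "finite I \<Longrightarrow> finite (supp (\<lambda>q. \<Sum>i\<in>I. (delta (h i) :: _ \<Rightarrow> 'r::comm_ring_1) q))"
proof -
  assume I: "finite I"
  have "supp (\<lambda>q. \<Sum>i\<in>I. (delta (h i) :: _ \<Rightarrow> 'r) q) \<subseteq> (\<Union>i\<in>I. supp (delta (h i) :: _ \<Rightarrow> 'r))"
    by (rule supp_sum)
  also have "\<dots> \<subseteq> h ` I" using supp_delta by fastforce
  finally show ?thesis using I finite_surj by blast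
qed

lemma lin_add:
  fixes x y :: "'b \<Rightarrow> 'r::comm_ring_1"
  assumes "finite (supp x)" "finite (supp y)"
  shows "lin f (\<lambda>i. a * x i + b * y i) = (\<lambda>p. a * lin f x p + b * lin f y p)"
proof
  fix p
  let ?S = "supp x \<union> supp y"
  have fS: "finite ?S" using assms by blast
  have s: "supp (\<lambda>i. a * x i + b * y i) \<subseteq> ?S" by (auto simp: supp_def)
  have "lin f (\<lambda>i. a * x i + b * y i) p = (\<Sum>c\<in>?S. (a * x c + b * y c) * f c p)" by (rule lin_sup[OF fS s])
  also have "\<dots> = a * (\<Sum>c\<in>?S. x c * f c p) + b * (\<Sum>c\<in>?S. y c * f c p)"
    by (simp add: sum.distrib sum_distrib_left algebra_simps)
  also have "\<dots> = a * lin f x p + b * lin f y p"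
    using lin_sup[OF fS, of x f p] lin_sup[OF fS, of y f p] by auto
  finally show "lin f (\<lambda>i. a * x i + b * y i) p = a * lin f x p + b * lin f y p" .
qed

lemma supp_lin: "supp (lin f x) \<subseteq> (\<Union>b\<in>supp x. supp (f b))"
proof
  fix c assume c: "c \<in> supp (lin f x)"
  show "c \<in> (\<Union>b\<in>supp x. supp (f b))"
  proof (rule ccontr)
    assume "c \<notin> (\<Union>b\<in>supp x. supp (f b))"
    then have "\<forall>b\<in>{b. x b \<noteq> 0}. x b * f b c = 0" by (auto simp: supp_def)
    then have "lin f x c = 0" unfolding lin_def by (simp add: sum.neutral)
    then show False using c by (simp add: supp_def)
  qed
qed


context rs begin

definition k1 :: "rtree \<Rightarrow> 'a \<Rightarrow> nat set \<Rightarrow> (rtree \<times> 'a) set" where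
  "k1 T s e = rclass phi phimap (cut_tree1 T e) (restr phimap T (cut_tree1 T e) s)"
definition k2 :: "rtree \<Rightarrow> 'a \<Rightarrow> nat set \<Rightarrow> (rtree \<times> 'a) set" where
  "k2 T s e = rclass phi phimap (cut_tree2 T e) (restr phimap T (cut_tree2 T e) s)"

lemma rho_gen_eq: "(rho_gen phi phimap T s :: _ \<Rightarrow> 'r::comm_ring_1) = (\<lambda>q. \<Sum>e\<in>edges T. 1 * delta (k1 T s e, k2 T s e) q)"
  unfolding rho_gen_def k1_def k2_def by (simp add: fun_eq_iff sum_fun_apply)

lemma lin_rho_gen:
  assumes "is_rtree T"
  shows "lin h (rho_gen phi phimap T s :: _ \<Rightarrow> 'r::comm_ring_1) = (\<lambda>q. \<Sum>e\<in>edges T. h (k1 T s e, k2 T s e) q)"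
proof -
  have "lin h (rho_gen phi phimap T s :: _ \<Rightarrow> 'r) = (\<lambda>q. \<Sum>e\<in>edges T. 1 * lin h (delta (k1 T s e, k2 T s e)) q)"
    unfolding rho_gen_eq
    by (rule lin_comb[OF finite_edges[OF assms]]) (rule fin_supp_delta)
  then show ?thesis by (simp add: lin_delta)
qed

lemma k_phi:
  assumes "is_rtree T" "s \<in> phi T" "e \<in> edges T"
  shows "is_rtree (cut_tree1 T e)" "restr phimap T (cut_tree1 T e) s \<in> phi (cut_tree1 T e)"
    "is_rtree (cut_tree2 T e)" "restr phimap T (cut_tree2 T e) s \<in> phi (cut_tree2 T e)"
proof -
  interpret c: cut T e by (rule cut.intro[OF assms(1,3)])
  show "is_rtree (cut_tree1 T e)" by (rule c.rtree1)
  show "is_rtree (cut_tree2 T e)" by (rule c.rtree2)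
  show "restr phimap T (cut_tree1 T e) s \<in> phi (cut_tree1 T e)" by (rule restr_phi1[OF assms(1,3,2)])
  show "restr phimap T (cut_tree2 T e) s \<in> phi (cut_tree2 T e)" by (rule restr_phi2[OF assms(1,3,2)])
qed

lemma rho_delta:
  assumes rt: "is_rtree T" and sT: "s \<in> phi T"
  shows "(rho_tree phi phimap (delta (rclass phi phimap T s)) :: _ \<Rightarrow> 'r::comm_ring_1) = rho_gen phi phimap T s"
proof -
  let ?C = "rclass phi phimap T s"
  have "(SOME p. p \<in> ?C) \<in> ?C" using rclass_refl[OF rt sT] by (rule someI)
  moreover obtain T' s' where p: "(SOME p. p \<in> ?C) = (T', s')" by (cases "SOME p. p \<in> ?C") blast
  ultimately have m: "(T', s') \<in> ?C" by simp
  show ?thesis unfolding rho_tree_def lin_delta p using rho_inv[OF rt sT m] by simp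
qed

lemma rclasses_k:
  assumes "is_rtree T" "s \<in> phi T" "e \<in> edges T"
  shows "k1 T s e \<in> rclasses phi phimap" "k2 T s e \<in> rclasses phi phimap"
proof -
  have "\<exists>T' s'. k1 T s e = rclass phi phimap T' s' \<and> is_rtree T' \<and> s' \<in> phi T'"
    using k_phi(1,2)[OF assms] unfolding k1_def by blast
  then show "k1 T s e \<in> rclasses phi phimap" unfolding rclasses_def by blast
  have "\<exists>T' s'. k2 T s e = rclass phi phimap T' s' \<and> is_rtree T' \<and> s' \<in> phi T'"
    using k_phi(3,4)[OF assms] unfolding k2_def by blast
  then show "k2 T s e \<in> rclasses phi phimap" unfolding rclasses_def by blast
qed

lemma supp_rho_gen:
  assumes "is_rtree T" "s \<in> phi T"
  shows "finite (supp (rho_gen phi phimap T s :: _ \<Rightarrow> 'r::comm_ring_1))"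
    "supp (rho_gen phi phimap T s :: _ \<Rightarrow> 'r) \<subseteq> rclasses phi phimap \<times> rclasses phi phimap"
proof -
  have "supp (rho_gen phi phimap T s :: _ \<Rightarrow> 'r) \<subseteq> (\<Union>e\<in>edges T. supp (delta (k1 T s e, k2 T s e) :: _ \<Rightarrow> 'r))"
    unfolding rho_gen_eq using supp_sum by simp
  also have "\<dots> \<subseteq> (\<lambda>e. (k1 T s e, k2 T s e)) ` edges T"
  proof (rule UN_least)
    fix e assume "e \<in> edges T"
    then show "supp (delta (k1 T s e, k2 T s e) :: _ \<Rightarrow> 'r) \<subseteq> (\<lambda>e. (k1 T s e, k2 T s e)) ` edges T"
      using supp_delta[of "(k1 T s e, k2 T s e)"] by blast
  qed
  finally have s: "supp (rho_gen phi phimap T s :: _ \<Rightarrow> 'r) \<subseteq> (\<lambda>e. (k1 T s e, k2 T s e)) ` edges T" .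
  then show "finite (supp (rho_gen phi phimap T s :: _ \<Rightarrow> 'r))"
    using finite_edges[OF assms(1)] finite_subset by blast
  show "supp (rho_gen phi phimap T s :: _ \<Rightarrow> 'r) \<subseteq> rclasses phi phimap \<times> rclasses phi phimap"
    using s rclasses_k[OF assms] by blast
qed

end


locale gen = rs phi phimap for phi :: "rtree \<Rightarrow> 'a set" and phimap +
  fixes T :: rtree and s :: 'a
  assumes rt: "is_rtree T" and sT: "s \<in> phi T"
begin

definition M where "M e f = rclass phi phimap (cut_tree2 (cut_tree1 T e) f) (restr phimap T (cut_tree2 (cut_tree1 T e) f) s)"
definition N where "N e f = rclass phi phimap (cut_tree2 (cut_tree2 T e) f) (restr phimap T (cut_tree2 (cut_tree2 T e) f) s)"
definition tl where "tl p = delta (k1 T s (snd p), M (fst p) (snd p), k2 T s (fst p))"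
definition ti where "ti p = delta (k1 T s (fst p), k1 T s (snd p), N (fst p) (snd p))"
definition SL where "SL = {p. fst p \<in> edges T \<and> snd p \<in> edges T \<and> snd p \<noteq> fst p \<and> snd p \<subseteq> cut_verts1 T (fst p)}"
definition SR where "SR = {p. fst p \<in> edges T \<and> snd p \<in> edges T \<and> snd p \<noteq> fst p \<and> snd p \<subseteq> cut_verts2 T (fst p)
   \<and> fst p \<subseteq> cut_verts1 T (snd p)}"
definition SI where "SI = {p. fst p \<in> edges T \<and> snd p \<in> edges T \<and> snd p \<noteq> fst p \<and> snd p \<subseteq> cut_verts2 T (fst p)
   \<and> fst p \<subseteq> cut_verts2 T (snd p)}"

lemma finE: "finite (edges T)" by (rule finite_edges[OF rt])

lemma fin_sets: "finite SL" "finite SR" "finite SI"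
proof -
  have "SL \<subseteq> edges T \<times> edges T" "SR \<subseteq> edges T \<times> edges T" "SI \<subseteq> edges T \<times> edges T"
    unfolding SL_def SR_def SI_def by auto
  then show "finite SL" "finite SR" "finite SI" using finE finite_subset by blast+
qed

lemma sigL: "Sigma (edges T) (\<lambda>e. edges (cut_tree1 T e)) = SL"
proof -
  have "edges (cut_tree1 T e) = {g \<in> edges T - {e}. g \<subseteq> cut_verts1 T e}" if "e \<in> edges T" for e
    using cut.edges_cut1[OF cut.intro[OF rt that]] .
  then show ?thesis unfolding SL_def by auto
qed

lemma sigR: "Sigma (edges T) (\<lambda>e. edges (cut_tree2 T e)) = SR \<union> SI" "SR \<inter> SI = {}"
proof -
  have ed: "edges (cut_tree2 T e) = {g \<in> edges T - {e}. g \<subseteq> cut_verts2 T e}" if "e \<in> edges T" for e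
    using cut.edges_cut2[OF cut.intro[OF rt that]] .
  have side: "e \<subseteq> cut_verts1 T f \<or> e \<subseteq> cut_verts2 T f" if "e \<in> edges T" "f \<in> edges T" "f \<noteq> e" for e f
    using cut.edge_side[OF cut.intro[OF rt that(2)] that(1)] that(3) by blast
  show "Sigma (edges T) (\<lambda>e. edges (cut_tree2 T e)) = SR \<union> SI"
  proof
    show "Sigma (edges T) (\<lambda>e. edges (cut_tree2 T e)) \<subseteq> SR \<union> SI"
    proof
      fix p assume "p \<in> Sigma (edges T) (\<lambda>e. edges (cut_tree2 T e))"
      then obtain e f where p: "p = (e, f)" "e \<in> edges T" "f \<in> edges (cut_tree2 T e)" by blast
      then have f: "f \<in> edges T" "f \<noteq> e" "f \<subseteq> cut_verts2 T e" using ed by auto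
      then show "p \<in> SR \<union> SI" using side[OF p(2) f(1,2)] p unfolding SR_def SI_def by auto
    qed
    show "SR \<union> SI \<subseteq> Sigma (edges T) (\<lambda>e. edges (cut_tree2 T e))"
      unfolding SR_def SI_def using ed by auto
  qed
  show "SR \<inter> SI = {}"
  proof -
    have "False" if "e \<in> edges T" "e \<subseteq> cut_verts1 T f" "e \<subseteq> cut_verts2 T f" for e f
    proof -
      have "e \<noteq> {}" using rtreeD(3)[OF rt that(1)] by blast
      then show False using that(2,3) by (auto simp: cut_verts1_def)
    qed
    then show ?thesis unfolding SR_def SI_def by blast
  qed
qed

lemma swap_SR: "prod.swap ` SR = SL"
proof
  show "prod.swap ` SR \<subseteq> SL" unfolding SR_def SL_def by auto
  show "SL \<subseteq> prod.swap ` SR"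
  proof
    fix p assume p: "p \<in> SL"
    obtain e f where ef: "p = (e, f)" by fastforce
    have e: "e \<in> edges T" "f \<in> edges T" "f \<noteq> e" "f \<subseteq> cut_verts1 T e" using p ef unfolding SL_def by auto
    interpret pr: pair T e f by (rule pair.intro[OF rt e(1,2)]) (use e(3) in blast)
    have "e \<subseteq> cut_verts2 T f" by (rule pr.below_e2[OF e(4)])
    then have "(f, e) \<in> SR" using e unfolding SR_def by auto
    then show "p \<in> prod.swap ` SR" using ef by force
  qed
qed

lemma swap_SI: "prod.swap ` SI = SI"
  unfolding SI_def by auto

lemma TL_term:
  assumes e: "e \<in> edges T" and f: "f \<in> edges (cut_tree1 T e)"
  shows "k1 (cut_tree1 T e) (restr phimap T (cut_tree1 T e) s) f = k1 T s f"
    "k2 (cut_tree1 T e) (restr phimap T (cut_tree1 T e) s) f = M e f"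
proof -
  interpret ce: cut T e by (rule cut.intro[OF rt e])
  have f': "f \<in> edges T" "f \<noteq> e" "f \<subseteq> cut_verts1 T e" using f by auto
  interpret pr: pair T e f by (rule pair.intro[OF rt e f'(1)]) (use f'(2) in blast)
  interpret c': cut "cut_tree1 T e" f by (rule pr.cut1_rt[OF refl f'(3)])
  show "k1 (cut_tree1 T e) (restr phimap T (cut_tree1 T e) s) f = k1 T s f"
    unfolding k1_def using restr_restr[OF c'.emb1 ce.emb1 sT] by (simp add: pr.ident_a[OF f'(3)])
  show "k2 (cut_tree1 T e) (restr phimap T (cut_tree1 T e) s) f = M e f"
    unfolding k2_def restr_restr[OF c'.emb2 ce.emb1 sT] M_def ..
qed

lemma TR_term_R:
  assumes p: "(e, f) \<in> SR"
  shows "k1 (cut_tree2 T e) (restr phimap T (cut_tree2 T e) s) f = M f e"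
    "k2 (cut_tree2 T e) (restr phimap T (cut_tree2 T e) s) f = k2 T s f"
proof -
  have f': "e \<in> edges T" "f \<in> edges T" "f \<noteq> e" "f \<subseteq> cut_verts2 T e" "e \<subseteq> cut_verts1 T f"
    using p unfolding SR_def by auto
  interpret ce: cut T e by (rule cut.intro[OF rt f'(1)])
  interpret pr: pair T f e by (rule pair.intro[OF rt f'(2) f'(1)]) (use f'(3) in blast)
  interpret c': cut "cut_tree2 T e" f by (rule pr.cut2_rt[OF refl f'(4)])
  show "k1 (cut_tree2 T e) (restr phimap T (cut_tree2 T e) s) f = M f e"
    unfolding k1_def M_def using restr_restr[OF c'.emb1 ce.emb2 sT] by (simp add: pr.ident_b[OF f'(5)])
  show "k2 (cut_tree2 T e) (restr phimap T (cut_tree2 T e) s) f = k2 T s f"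
    unfolding k2_def using restr_restr[OF c'.emb2 ce.emb2 sT] by (simp add: pr.ident_c[OF f'(5)])
qed

lemma TR_term_I:
  assumes p: "(e, f) \<in> SI"
  shows "k1 (cut_tree2 T e) (restr phimap T (cut_tree2 T e) s) f = k1 T s f"
    "k2 (cut_tree2 T e) (restr phimap T (cut_tree2 T e) s) f = N e f"
proof -
  have f': "e \<in> edges T" "f \<in> edges T" "f \<noteq> e" "f \<subseteq> cut_verts2 T e" "e \<subseteq> cut_verts2 T f"
    using p unfolding SI_def by auto
  interpret ce: cut T e by (rule cut.intro[OF rt f'(1)])
  interpret pr: pair T e f by (rule pair.intro[OF rt f'(1) f'(2)]) (use f'(3) in blast)
  interpret prs: pair T f e by (rule pair.intro[OF rt f'(2) f'(1)]) (use f'(3) in blast)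
  interpret c': cut "cut_tree2 T e" f by (rule prs.cut2_rt[OF refl f'(4)])
  show "k1 (cut_tree2 T e) (restr phimap T (cut_tree2 T e) s) f = k1 T s f"
    unfolding k1_def using restr_restr[OF c'.emb1 ce.emb2 sT] by (simp add: pr.ident_d[OF f'(5) f'(4)])
  show "k2 (cut_tree2 T e) (restr phimap T (cut_tree2 T e) s) f = N e f"
    unfolding k2_def restr_restr[OF c'.emb2 ce.emb2 sT] N_def ..
qed

lemma N_sym: "(e, f) \<in> SI \<Longrightarrow> N e f = N f e"
proof -
  assume p: "(e, f) \<in> SI"
  have f': "e \<in> edges T" "f \<in> edges T" "f \<noteq> e" "f \<subseteq> cut_verts2 T e" "e \<subseteq> cut_verts2 T f"
    using p unfolding SI_def by auto
  have pr: "pair T e f" by (rule pair.intro[OF rt f'(1) f'(2)]) (use f'(3) in blast)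
  show ?thesis unfolding N_def ident_e[OF pr f'(5) f'(4)] ..
qed

lemma rho_cut:
  assumes "e \<in> edges T"
  shows "(rho_tree phi phimap (delta (k1 T s e)) :: _ \<Rightarrow> 'r::comm_ring_1)
      = rho_gen phi phimap (cut_tree1 T e) (restr phimap T (cut_tree1 T e) s)"
    "(rho_tree phi phimap (delta (k2 T s e)) :: _ \<Rightarrow> 'r::comm_ring_1)
      = rho_gen phi phimap (cut_tree2 T e) (restr phimap T (cut_tree2 T e) s)"
  unfolding k1_def k2_def
  by (rule rho_delta[OF k_phi(1,2)[OF rt sT assms]], rule rho_delta[OF k_phi(3,4)[OF rt sT assms]])

lemma TL_eq: "(tens_left (rho_tree phi phimap) (rho_gen phi phimap T s) :: _ \<Rightarrow> 'r::comm_ring_1)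
   = (\<lambda>q. \<Sum>p\<in>SL. tl p q)"
proof -
  have "(tens_left (rho_tree phi phimap) (rho_gen phi phimap T s) :: _ \<Rightarrow> 'r)
    = (\<lambda>q. \<Sum>e\<in>edges T. lin (\<lambda>(c1, c2). delta (c1, c2, k2 T s e))
          ((rho_tree phi phimap :: _ \<Rightarrow> _ \<Rightarrow> 'r) (delta (k1 T s e))) q)"
    unfolding tens_left_def lin_rho_gen[OF rt] by simp
  also have "\<dots> = (\<lambda>q. \<Sum>e\<in>edges T. \<Sum>f\<in>edges (cut_tree1 T e). tl (e, f) q)"
  proof (rule ext, rule sum.cong[OF refl])
    fix q e assume e: "e \<in> edges T"
    have "lin (\<lambda>(c1, c2). delta (c1, c2, k2 T s e)) ((rho_tree phi phimap :: _ \<Rightarrow> _ \<Rightarrow> 'r) (delta (k1 T s e))) q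
      = (\<Sum>f\<in>edges (cut_tree1 T e). delta (k1 (cut_tree1 T e) (restr phimap T (cut_tree1 T e) s) f,
            k2 (cut_tree1 T e) (restr phimap T (cut_tree1 T e) s) f, k2 T s e) q)"
      unfolding rho_cut(1)[OF e] lin_rho_gen[OF k_phi(1)[OF rt sT e]] by simp
    also have "\<dots> = (\<Sum>f\<in>edges (cut_tree1 T e). tl (e, f) q)"
      by (rule sum.cong[OF refl]) (simp add: TL_term[OF e] tl_def)
    finally show "lin (\<lambda>(c1, c2). delta (c1, c2, k2 T s e)) ((rho_tree phi phimap :: _ \<Rightarrow> _ \<Rightarrow> 'r) (delta (k1 T s e))) q
      = (\<Sum>f\<in>edges (cut_tree1 T e). tl (e, f) q)" .
  qed
  also have "\<dots> = (\<lambda>q. \<Sum>p\<in>SL. tl p q)"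
  proof (rule ext)
    fix q
    have fin: "\<forall>e\<in>edges T. finite (edges (cut_tree1 T e))"
      using finite_edges k_phi(1)[OF rt sT] by blast
    show "(\<Sum>e\<in>edges T. \<Sum>f\<in>edges (cut_tree1 T e). tl (e, f) q) = (\<Sum>p\<in>SL. tl p q)"
      unfolding sum.Sigma[OF finE fin, of "\<lambda>e f. tl (e, f) q"] sigL[symmetric]
      by (simp add: split_def)
  qed
  finally show ?thesis .
qed

lemma TR_eq: "(tens_right (rho_tree phi phimap) (rho_gen phi phimap T s) :: _ \<Rightarrow> 'r::comm_ring_1)
   = (\<lambda>q. (\<Sum>p\<in>SL. tl p q) + (\<Sum>p\<in>SI. ti p q))"
proof -
  let ?g = "\<lambda>e f. (delta (k1 T s e, k1 (cut_tree2 T e) (restr phimap T (cut_tree2 T e) s) f,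
            k2 (cut_tree2 T e) (restr phimap T (cut_tree2 T e) s) f) :: _ \<Rightarrow> 'r)"
  have "(tens_right (rho_tree phi phimap) (rho_gen phi phimap T s) :: _ \<Rightarrow> 'r)
    = (\<lambda>q. \<Sum>e\<in>edges T. lin (\<lambda>(d1, d2). delta (k1 T s e, d1, d2))
          ((rho_tree phi phimap :: _ \<Rightarrow> _ \<Rightarrow> 'r) (delta (k2 T s e))) q)"
    unfolding tens_right_def lin_rho_gen[OF rt] by simp
  also have "\<dots> = (\<lambda>q. \<Sum>e\<in>edges T. \<Sum>f\<in>edges (cut_tree2 T e). ?g e f q)"
  proof (rule ext, rule sum.cong[OF refl])
    fix q e assume e: "e \<in> edges T"
    show "lin (\<lambda>(d1, d2). delta (k1 T s e, d1, d2)) ((rho_tree phi phimap :: _ \<Rightarrow> _ \<Rightarrow> 'r) (delta (k2 T s e))) q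
      = (\<Sum>f\<in>edges (cut_tree2 T e). ?g e f q)"
      unfolding rho_cut(2)[OF e] lin_rho_gen[OF k_phi(3)[OF rt sT e]] by simp
  qed
  also have "\<dots> = (\<lambda>q. (\<Sum>p\<in>SR. ?g (fst p) (snd p) q) + (\<Sum>p\<in>SI. ?g (fst p) (snd p) q))"
  proof (rule ext)
    fix q
    have fin: "\<forall>e\<in>edges T. finite (edges (cut_tree2 T e))"
      using finite_edges k_phi(3)[OF rt sT] by blast
    have "(\<Sum>e\<in>edges T. \<Sum>f\<in>edges (cut_tree2 T e). ?g e f q) = (\<Sum>p\<in>SR \<union> SI. ?g (fst p) (snd p) q)"
      unfolding sum.Sigma[OF finE fin, of "\<lambda>e f. ?g e f q"] sigR(1)[symmetric]
      by (simp add: split_def)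
    also have "\<dots> = (\<Sum>p\<in>SR. ?g (fst p) (snd p) q) + (\<Sum>p\<in>SI. ?g (fst p) (snd p) q)"
      by (rule sum.union_disjoint[OF fin_sets(2,3) sigR(2)])
    finally show "(\<Sum>e\<in>edges T. \<Sum>f\<in>edges (cut_tree2 T e). ?g e f q) =
       (\<Sum>p\<in>SR. ?g (fst p) (snd p) q) + (\<Sum>p\<in>SI. ?g (fst p) (snd p) q)" .
  qed
  also have "\<dots> = (\<lambda>q. (\<Sum>p\<in>SR. tl (prod.swap p) q) + (\<Sum>p\<in>SI. ti p q))"
  proof (rule ext)
    fix q
    have "(\<Sum>p\<in>SR. ?g (fst p) (snd p) q) = (\<Sum>p\<in>SR. tl (prod.swap p) q)"
    proof (rule sum.cong[OF refl])
      fix p assume p: "p \<in> SR"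
      obtain e f where ef: "p = (e, f)" by fastforce
      show "?g (fst p) (snd p) q = tl (prod.swap p) q"
        using TR_term_R[of e f] p ef by (simp add: tl_def)
    qed
    moreover have "(\<Sum>p\<in>SI. ?g (fst p) (snd p) q) = (\<Sum>p\<in>SI. ti p q)"
    proof (rule sum.cong[OF refl])
      fix p assume p: "p \<in> SI"
      obtain e f where ef: "p = (e, f)" by fastforce
      show "?g (fst p) (snd p) q = ti p q"
        using TR_term_I[of e f] p ef by (simp add: ti_def)
    qed
    ultimately show "(\<Sum>p\<in>SR. ?g (fst p) (snd p) q) + (\<Sum>p\<in>SI. ?g (fst p) (snd p) q)
      = (\<Sum>p\<in>SR. tl (prod.swap p) q) + (\<Sum>p\<in>SI. ti p q)" by simp
  qed
  also have "\<dots> = (\<lambda>q. (\<Sum>p\<in>SL. tl p q) + (\<Sum>p\<in>SI. ti p q))"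
    unfolding swap_SR[symmetric] by (subst sum.reindex) (auto simp: inj_on_def)
  finally show ?thesis .
qed

definition W :: "_ \<Rightarrow> 'r::comm_ring_1" where
  "W = tens_left (rho_tree phi phimap) (rho_gen phi phimap T s) - tens_right (rho_tree phi phimap) (rho_gen phi phimap T s)"

lemma W_eq: "W = (\<lambda>q. \<Sum>p\<in>SI. (- 1) * ti p q)"
  unfolding W_def TL_eq TR_eq by (simp add: fun_eq_iff sum_negf)

lemma W_fin: "finite (supp (W :: _ \<Rightarrow> 'r::comm_ring_1))"
proof -
  have "supp (W :: _ \<Rightarrow> 'r) \<subseteq> (\<Union>p\<in>SI. supp (\<lambda>q. (- 1) * (ti p q :: 'r)))"
    unfolding W_eq by (rule supp_sum)
  also have "\<dots> \<subseteq> (\<Union>p\<in>SI. supp (ti p :: _ \<Rightarrow> 'r))" by (auto simp: supp_def)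
  finally have "supp (W :: _ \<Rightarrow> 'r) \<subseteq> (\<Union>p\<in>SI. supp (ti p :: _ \<Rightarrow> 'r))" .
  moreover have "finite (\<Union>p\<in>SI. supp (ti p :: _ \<Rightarrow> 'r))"
    unfolding ti_def by (intro finite_UN_I fin_sets(3) fin_supp_delta)
  ultimately show ?thesis using finite_subset by blast
qed

lemma W_P12: "P12 (W :: _ \<Rightarrow> 'r::comm_ring_1) = W"
proof -
  have "P12 W = (\<lambda>c. \<Sum>p\<in>SI. (- 1) * lin (\<lambda>(a, b, c). delta (b, a, c)) (ti p) c)"
    unfolding P12_def W_eq
    by (rule lin_comb[OF fin_sets(3)]) (simp add: ti_def fin_supp_delta)
  also have "\<dots> = (\<lambda>c. \<Sum>p\<in>SI. (- 1) * (delta (k1 T s (snd p), k1 T s (fst p), N (fst p) (snd p)) :: _ \<Rightarrow> 'r) c)"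
    by (simp add: ti_def lin_delta)
  also have "\<dots> = (\<lambda>c. \<Sum>p\<in>SI. (- 1) * ti p c)"
  proof (rule ext)
    fix c
    let ?h = "\<lambda>p. (- 1) * (delta (k1 T s (snd p), k1 T s (fst p), N (fst p) (snd p)) :: _ \<Rightarrow> 'r) c"
    have "(\<Sum>p\<in>SI. ?h p) = (\<Sum>p\<in>prod.swap ` SI. ?h p)" unfolding swap_SI ..
    also have "\<dots> = (\<Sum>p\<in>SI. ?h (prod.swap p))" by (subst sum.reindex) (auto simp: inj_on_def)
    also have "\<dots> = (\<Sum>p\<in>SI. (- 1) * ti p c)"
    proof (rule sum.cong[OF refl])
      fix p assume p: "p \<in> SI"
      obtain e f where ef: "p = (e, f)" by fastforce
      show "?h (prod.swap p) = (- 1) * ti p c" using N_sym[of e f] p ef by (simp add: ti_def)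
    qed
    finally show "(\<Sum>p\<in>SI. ?h p) = (\<Sum>p\<in>SI. (- 1) * ti p c)" .
  qed
  finally show ?thesis unfolding W_eq .
qed

end


context rs begin

lemma rho_lin: "(rho_tree phi phimap x :: _ \<Rightarrow> 'r::comm_ring_1) = lin (\<lambda>C. rho_tree phi phimap (delta C)) x"
  unfolding rho_tree_def lin_delta ..

lemma cls_gen: "C \<in> rclasses phi phimap \<Longrightarrow> \<exists>T s. is_rtree T \<and> s \<in> phi T \<and> C = rclass phi phimap T s"
  unfolding rclasses_def by blast

lemma R_fin:
  assumes "C \<in> rclasses phi phimap"
  shows "finite (supp (rho_tree phi phimap (delta C) :: _ \<Rightarrow> 'r::comm_ring_1))"
    "supp (rho_tree phi phimap (delta C) :: _ \<Rightarrow> 'r) \<subseteq> rclasses phi phimap \<times> rclasses phi phimap"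
proof -
  obtain T s where Ts: "is_rtree T" "s \<in> phi T" "C = rclass phi phimap T s" using cls_gen[OF assms] by blast
  show "finite (supp (rho_tree phi phimap (delta C) :: _ \<Rightarrow> 'r))"
    "supp (rho_tree phi phimap (delta C) :: _ \<Rightarrow> 'r) \<subseteq> rclasses phi phimap \<times> rclasses phi phimap"
    unfolding Ts(3) rho_delta[OF Ts(1,2)] using supp_rho_gen[OF Ts(1,2)] by auto
qed

lemma W_C:
  assumes "C \<in> rclasses phi phimap"
  defines "R \<equiv> (rho_tree phi phimap (delta C) :: _ \<Rightarrow> 'r::comm_ring_1)"
  shows "P12 (tens_left (rho_tree phi phimap) R - tens_right (rho_tree phi phimap) R)
      = tens_left (rho_tree phi phimap) R - tens_right (rho_tree phi phimap) R"
    "finite (supp (tens_left (rho_tree phi phimap) R - tens_right (rho_tree phi phimap) R))"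
proof -
  obtain T s where Ts: "is_rtree T" "s \<in> phi T" "C = rclass phi phimap T s" using cls_gen[OF assms(1)] by blast
  interpret g: gen phi phimap T s by (rule gen.intro[OF rs_axioms]) (use Ts(1,2) in \<open>simp add: gen_axioms_def\<close>)
  have R: "R = rho_gen phi phimap T s" unfolding R_def Ts(3) by (rule rho_delta[OF Ts(1,2)])
  show "P12 (tens_left (rho_tree phi phimap) R - tens_right (rho_tree phi phimap) R)
      = tens_left (rho_tree phi phimap) R - tens_right (rho_tree phi phimap) R"
    using g.W_P12 unfolding R g.W_def .
  show "finite (supp (tens_left (rho_tree phi phimap) R - tens_right (rho_tree phi phimap) R))"
    using g.W_fin unfolding R g.W_def .
qed

lemma pre_lie: "pre_lie_comult (rclasses phi phimap) (rho_tree phi phimap :: _ \<Rightarrow> _ \<Rightarrow> 'r::comm_ring_1)"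
  unfolding pre_lie_comult_def
proof (intro conjI ballI allI)
  fix x y :: "(rtree \<times> 'a) set \<Rightarrow> 'r" and a b :: 'r
  assume x: "x \<in> free_mod (rclasses phi phimap)" and y: "y \<in> free_mod (rclasses phi phimap)"
  show "rho_tree phi phimap (\<lambda>i. a * x i + b * y i) = (\<lambda>p. a * rho_tree phi phimap x p + b * rho_tree phi phimap y p)"
  proof -
    have "finite (supp x)" "finite (supp y)" using x y by (simp_all add: free_mod_def supp_def)
    then show ?thesis unfolding rho_lin[of "\<lambda>i. a * x i + b * y i"] rho_lin[of x] rho_lin[of y] by (rule lin_add)
  qed
next
  fix x :: "(rtree \<times> 'a) set \<Rightarrow> 'r"
  assume x: "x \<in> free_mod (rclasses phi phimap)"
  have sx: "finite (supp x)" "supp x \<subseteq> rclasses phi phimap" using x by (auto simp: free_mod_def supp_def)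
  have "supp (rho_tree phi phimap x :: _ \<Rightarrow> 'r) \<subseteq> (\<Union>C\<in>supp x. supp (rho_tree phi phimap (delta C) :: _ \<Rightarrow> 'r))"
    unfolding rho_lin[of x] by (rule supp_lin)
  moreover have "finite (\<Union>C\<in>supp x. supp (rho_tree phi phimap (delta C) :: _ \<Rightarrow> 'r))"
    using sx by (intro finite_UN_I) (auto intro: R_fin(1))
  moreover have "(\<Union>C\<in>supp x. supp (rho_tree phi phimap (delta C) :: _ \<Rightarrow> 'r)) \<subseteq> rclasses phi phimap \<times> rclasses phi phimap"
    using sx R_fin(2) by blast
  ultimately have "finite (supp (rho_tree phi phimap x :: _ \<Rightarrow> 'r))"
    "supp (rho_tree phi phimap x :: _ \<Rightarrow> 'r) \<subseteq> rclasses phi phimap \<times> rclasses phi phimap"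
    using finite_subset by blast+
  then show "rho_tree phi phimap x \<in> free_mod (rclasses phi phimap \<times> rclasses phi phimap)"
    unfolding free_mod_def supp_def by blast
next
  fix x :: "(rtree \<times> 'a) set \<Rightarrow> 'r"
  assume x: "x \<in> free_mod (rclasses phi phimap)"
  have sx: "finite (supp x)" "supp x \<subseteq> rclasses phi phimap" using x by (auto simp: free_mod_def supp_def)
  define R where "R C = (rho_tree phi phimap (delta C) :: _ \<Rightarrow> 'r)" for C
  define Wc where "Wc C = tens_left (rho_tree phi phimap) (R C) - tens_right (rho_tree phi phimap) (R C)" for C
  have finR: "\<And>C. C \<in> supp x \<Longrightarrow> finite (supp (R C))" using R_fin(1) sx(2) unfolding R_def by blast
  have rx: "rho_tree phi phimap x = (\<lambda>b. \<Sum>C\<in>supp x. x C * R C b)"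
    unfolding rho_lin[of x] lin_def R_def supp_def ..
  have TL: "tens_left (rho_tree phi phimap) (rho_tree phi phimap x)
      = (\<lambda>q. \<Sum>C\<in>supp x. x C * tens_left (rho_tree phi phimap) (R C) q)"
    unfolding rx tens_left_def[of "rho_tree phi phimap"] by (rule lin_comb[OF sx(1) finR])
  have TR: "tens_right (rho_tree phi phimap) (rho_tree phi phimap x)
      = (\<lambda>q. \<Sum>C\<in>supp x. x C * tens_right (rho_tree phi phimap) (R C) q)"
    unfolding rx tens_right_def[of "rho_tree phi phimap"] by (rule lin_comb[OF sx(1) finR])
  have z: "tens_left (rho_tree phi phimap) (rho_tree phi phimap x) - tens_right (rho_tree phi phimap) (rho_tree phi phimap x)
      = (\<lambda>q. \<Sum>C\<in>supp x. x C * Wc C q)"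
    unfolding TL TR Wc_def by (simp add: fun_eq_iff sum_subtractf right_diff_distrib)
  have finW: "\<And>C. C \<in> supp x \<Longrightarrow> finite (supp (Wc C))" using W_C(2) sx(2) unfolding Wc_def R_def by blast
  have PW: "\<And>C. C \<in> supp x \<Longrightarrow> P12 (Wc C) = Wc C" using W_C(1) sx(2) unfolding Wc_def R_def by blast
  have "P12 (\<lambda>q. \<Sum>C\<in>supp x. x C * Wc C q) = (\<lambda>q. \<Sum>C\<in>supp x. x C * P12 (Wc C) q)"
    unfolding P12_def by (rule lin_comb[OF sx(1) finW])
  also have "\<dots> = (\<lambda>q. \<Sum>C\<in>supp x. x C * Wc C q)" using PW by (simp add: fun_eq_iff)
  finally have "P12 (\<lambda>q. \<Sum>C\<in>supp x. x C * Wc C q) = (\<lambda>q. \<Sum>C\<in>supp x. x C * Wc C q)" .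
  then show "let z = tens_left (rho_tree phi phimap) (rho_tree phi phimap x) - tens_right (rho_tree phi phimap) (rho_tree phi phimap x)
      in z - P12 z = 0"
    unfolding Let_def z by simp
qed

end


theorem lemma4p2:
  fixes phi :: "rtree \<Rightarrow> 'a set"
    and phimap :: "rtree \<Rightarrow> rtree \<Rightarrow> (nat \<Rightarrow> nat) \<Rightarrow> 'a \<Rightarrow> 'a"
  assumes "rtree_structure phi phimap"
  shows "(\<forall>T s T2 s2. is_rtree T \<and> s \<in> phi T \<and> (T2, s2) \<in> rclass phi phimap T s \<longrightarrow>
            (rho_gen phi phimap T2 s2 :: _ \<Rightarrow> 'r::comm_ring_1) = rho_gen phi phimap T s)
       \<and> pre_lie_comult (rclasses phi phimap) (rho_tree phi phimap :: _ \<Rightarrow> _ \<Rightarrow> 'r)"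
proof -
  interpret rs phi phimap by (rule rs.intro[OF assms])
  show ?thesis using rho_inv pre_lie by blast
qed

end
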